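(* Consider a MAP with $n$ phases labelled $1,\dots,n$, irreducible generator $\Lambda=\Lambda_0+\Lambda_1$ with $\Lambda_0$ nonsingular, stationary distribution $\boldsymbol\pi$, and initial phase distribution $\boldsymbol\theta=\boldsymbol\pi$. Then $$\lim_{t\to\infty}\mathrm{Cov}\big(N(t),\varphi(t)\big)=\sum_{i=1}^n i\,\big(\boldsymbol\pi\Lambda_1\Lambda^\sharp\big)_i.$$
   Context: A MAP with $n$ phases is a continuous-time Markov chain $\{(N(t),\varphi(t))\}$ on $\{0,1,2,\dots\}\times\{1,\dots,n\}$ specified by two $n\times n$ matrices: $\Lambda_1\ge0$ (entrywise), whose entry $(\Lambda_1)_{ij}$ is the rate of transitions $(k,i)\to(k+1,j)$, and $\Lambda_0$, with nonnegative off-diagonal entries giving the rates of transitions $(k,i)\to(k,j)$, $i\ne j$, and diagonal entries such that $\Lambda=\Lambda_0+\Lambda_1$ has zero row sums. $N(0)=0$ and $\varphi(0)$ has distribution $\boldsymbol\theta$ (row vector). $\boldsymbol\pi$ is the row vector with $\boldsymbol\pi\Lambda=0$, $\boldsymbol\pi\mathbf1=1$; $\mathbf 1$ is the all-ones column vector. $\Lambda^\sharp:=\int_0^\infty (e^{\Lambda t}-\mathbf 1\boldsymbol\pi)\,dt$ is the Drazin inverse of $\Lambda$. *)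

theory Defs
  imports "HOL-Analysis.Analysis"
begin

fun mat_pow :: "real^'n^'n \<Rightarrow> nat \<Rightarrow> real^'n^'n" where
  "mat_pow A 0 = mat 1"
| "mat_pow A (Suc k) = mat_pow A k ** A"

definition mat_exp :: "real^'n^'n \<Rightarrow> real^'n^'n" where
  "mat_exp A = (\<Sum>k. (1 / fact k) *\<^sub>R mat_pow A k)"

definition is_MAP :: "real^'n^'n \<Rightarrow> real^'n^'n \<Rightarrow> bool" where
  "is_MAP L0 L1 \<longleftrightarrow>
     (\<forall>i j. L1 $ i $ j \<ge> 0) \<and>
     (\<forall>i j. i \<noteq> j \<longrightarrow> L0 $ i $ j \<ge> 0) \<and>
     (\<forall>i. (\<Sum>j\<in>UNIV. (L0 + L1) $ i $ j) = 0)"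

definition irreducible_gen :: "real^'n^'n \<Rightarrow> bool" where
  "irreducible_gen L \<longleftrightarrow>
     (\<forall>i j. i \<noteq> j \<longrightarrow> (i, j) \<in> {(a, b). a \<noteq> b \<and> L $ a $ b > 0}\<^sup>+)"

definition drazin :: "real^'n^'n \<Rightarrow> real^'n \<Rightarrow> real^'n^'n" where
  "drazin L p = integral {0..} (\<lambda>t. mat_exp (t *\<^sub>R L) - (\<chi> i j. p $ j))"

text \<open>Transition matrices of the MAP: (map_P L0 L1 k t) $ i $ j is the probability of
  N(t)=k and phase(t)=j given phase(0)=i (and N(0)=0); they are the solution of
  the forward equations P_0' = P_0 L0, P_k' = P_k L0 + P_{k-1} L1.\<close>
fun map_P :: "real^'n^'n \<Rightarrow> real^'n^'n \<Rightarrow> nat \<Rightarrow> real \<Rightarrow> real^'n^'n" where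
  "map_P L0 L1 0 t = mat_exp (t *\<^sub>R L0)"
| "map_P L0 L1 (Suc k) t =
     integral {0..t} (\<lambda>s. map_P L0 L1 k s ** L1 ** mat_exp ((t - s) *\<^sub>R L0))"

definition map_joint :: "real^'n^'n \<Rightarrow> real^'n^'n \<Rightarrow> real^'n \<Rightarrow> real \<Rightarrow> nat \<Rightarrow> 'n \<Rightarrow> real" where
  "map_joint L0 L1 \<theta> t k j = (\<theta> v* map_P L0 L1 k t) $ j"

text \<open>Cov(N(t), phase(t)), with phase j carrying the numeric label lab j.\<close>
definition map_cov :: "real^'n^'n \<Rightarrow> real^'n^'n \<Rightarrow> real^'n \<Rightarrow> ('n \<Rightarrow> nat) \<Rightarrow> real \<Rightarrow> real" where
  "map_cov L0 L1 \<theta> lab t =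
     (\<Sum>k. \<Sum>j\<in>UNIV. real k * real (lab j) * map_joint L0 L1 \<theta> t k j)
     - (\<Sum>k. \<Sum>j\<in>UNIV. real k * map_joint L0 L1 \<theta> t k j)
       * (\<Sum>k. \<Sum>j\<in>UNIV. real (lab j) * map_joint L0 L1 \<theta> t k j)"

end

theory Submission
  imports Defs
begin

definition rn :: "real^'n^'n \<Rightarrow> real" where
  "rn A = Max (range (\<lambda>i. \<Sum>j\<in>UNIV. \<bar>A$i$j\<bar>))"

lemma rn_ge: "(\<Sum>j\<in>UNIV. \<bar>A$i$j\<bar>) \<le> rn A"
  unfolding rn_def by (rule Max_ge) auto

lemma rn_le: "(\<And>i. (\<Sum>j\<in>UNIV. \<bar>A$i$j\<bar>) \<le> c) \<Longrightarrow> rn A \<le> c"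
  unfolding rn_def by (subst Max_le_iff) auto

lemma rn_entry: "\<bar>A$i$j\<bar> \<le> rn A"
proof -
  have "\<bar>A$i$j\<bar> \<le> (\<Sum>j\<in>UNIV. \<bar>A$i$j\<bar>)"
    by (rule member_le_sum) auto
  also have "\<dots> \<le> rn A" by (rule rn_ge)
  finally show ?thesis .
qed

lemma rn_nonneg: "0 \<le> rn A"
  using rn_entry[of A] abs_ge_zero order_trans by blast

lemma rn_zero_iff: "rn A = 0 \<longleftrightarrow> A = 0"
proof
  assume "rn A = 0"
  then have "\<And>i j. A$i$j = 0" using rn_entry[of A] by (metis abs_le_zero_iff)
  then show "A = 0" by (simp add: vec_eq_iff)
next
  assume "A = 0" then show "rn A = 0"
    by (intro antisym rn_le) (auto simp: rn_nonneg)
qed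

lemma rn_add: "rn (A + B) \<le> rn A + rn B"
proof (rule rn_le)
  fix i
  have "(\<Sum>j\<in>UNIV. \<bar>(A+B)$i$j\<bar>) \<le> (\<Sum>j\<in>UNIV. \<bar>A$i$j\<bar> + \<bar>B$i$j\<bar>)"
    by (rule sum_mono) (simp add: abs_triangle_ineq)
  also have "\<dots> \<le> rn A + rn B" using rn_ge[of A i] rn_ge[of B i] by (simp add: sum.distrib)
  finally show "(\<Sum>j\<in>UNIV. \<bar>(A+B)$i$j\<bar>) \<le> rn A + rn B" .
qed

lemma rn_scale: "rn (r *\<^sub>R A) = \<bar>r\<bar> * rn A"
proof (rule antisym)
  show "rn (r *\<^sub>R A) \<le> \<bar>r\<bar> * rn A"
    by (rule rn_le) (simp add: abs_mult sum_distrib_left[symmetric] rn_ge mult_left_mono)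
  show "\<bar>r\<bar> * rn A \<le> rn (r *\<^sub>R A)"
  proof (cases "r = 0")
    case True then show ?thesis by (simp add: rn_nonneg)
  next
    case False
    have "rn A \<le> rn (r *\<^sub>R A) / \<bar>r\<bar>"
    proof (rule rn_le)
      fix i
      have "(\<Sum>j\<in>UNIV. \<bar>A$i$j\<bar>) = (\<Sum>j\<in>UNIV. \<bar>(r *\<^sub>R A)$i$j\<bar>) / \<bar>r\<bar>"
        using False by (simp add: abs_mult sum_distrib_left[symmetric])
      also have "\<dots> \<le> rn (r *\<^sub>R A) / \<bar>r\<bar>"
        by (rule divide_right_mono[OF rn_ge]) simp
      finally show "(\<Sum>j\<in>UNIV. \<bar>A$i$j\<bar>) \<le> rn (r *\<^sub>R A) / \<bar>r\<bar>" .
    qed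
    then show ?thesis using False by (simp add: field_simps)
  qed
qed

lemma rn_mult: "rn (A ** B) \<le> rn A * rn B"
proof (rule rn_le)
  fix i
  have "(\<Sum>j\<in>UNIV. \<bar>(A ** B)$i$j\<bar>) \<le> (\<Sum>j\<in>UNIV. \<Sum>k\<in>UNIV. \<bar>A$i$k\<bar> * \<bar>B$k$j\<bar>)"
    unfolding matrix_matrix_mult_def
    by (rule sum_mono) (simp add: sum_abs[THEN order_trans] abs_mult order_trans[OF sum_abs])
  also have "\<dots> = (\<Sum>k\<in>UNIV. \<bar>A$i$k\<bar> * (\<Sum>j\<in>UNIV. \<bar>B$k$j\<bar>))"
    by (subst sum.swap) (simp add: sum_distrib_left)
  also have "\<dots> \<le> (\<Sum>k\<in>UNIV. \<bar>A$i$k\<bar> * rn B)"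
    by (rule sum_mono) (simp add: mult_left_mono rn_ge)
  also have "\<dots> \<le> rn A * rn B"
    by (simp add: sum_distrib_right[symmetric] mult_right_mono rn_ge rn_nonneg)
  finally show "(\<Sum>j\<in>UNIV. \<bar>(A ** B)$i$j\<bar>) \<le> rn A * rn B" .
qed

lemma rn_one: "rn (mat 1 :: real^'n^'n) = 1"
proof -
  have "\<And>i. (\<Sum>j\<in>UNIV. \<bar>(mat 1 :: real^'n^'n)$i$j\<bar>) = 1"
    by (simp add: mat_def if_distrib cong: if_cong)
  then show ?thesis unfolding rn_def by simp
qed

lemma norm_le_rn: "norm A \<le> real CARD('n) * rn (A::real^'n^'n)"
proof -
  have "norm A \<le> (\<Sum>i\<in>UNIV. norm (A$i))"
    unfolding norm_vec_def by (rule L2_set_le_sum) simp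
  also have "\<dots> \<le> (\<Sum>i\<in>UNIV. \<Sum>j\<in>UNIV. \<bar>A$i$j\<bar>)"
    by (rule sum_mono) (rule norm_le_l1_cart)
  also have "\<dots> \<le> (\<Sum>i\<in>(UNIV::'n set). rn A)"
    by (rule sum_mono) (rule rn_ge)
  finally show ?thesis by simp
qed

lemma entry_le_norm: "\<bar>(A::real^'n^'m)$i$j\<bar> \<le> norm A"
proof -
  have "\<bar>A$i$j\<bar> \<le> norm (A$i)" by (rule component_le_norm_cart)
  also have "\<dots> \<le> norm A" unfolding norm_vec_def[of A] by (rule member_le_L2_set) simp_all
  finally show ?thesis .
qed

lemma rn_le_norm: "rn (A::real^'n^'n) \<le> real CARD('n) * norm A"
proof (rule rn_le)
  fix i
  have "(\<Sum>j\<in>UNIV. \<bar>A$i$j\<bar>) \<le> (\<Sum>j\<in>(UNIV::'n set). norm A)"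
    by (intro sum_mono entry_le_norm)
  then show "(\<Sum>j\<in>UNIV. \<bar>A$i$j\<bar>) \<le> real CARD('n) * norm A" by simp
qed


lemma matrix_add_rdistrib': "((A::'a::semiring_1^'n^'m) + B) ** C = A ** C + B ** C"
  by (vector matrix_matrix_mult_def sum.distrib[symmetric] field_simps)

typedef (overloaded) ('n::finite) mt = "UNIV :: (real^'n^'n) set"
  morphisms mrep mabs by simp

lemma mrep_mabs[simp]: "mrep (mabs x) = x"
  by (simp add: mabs_inverse)

lemma mt_eq_iff: "a = b \<longleftrightarrow> mrep a = mrep b"
  by (simp add: mrep_inject)

instantiation mt :: (finite) real_normed_algebra_1
begin
definition zero_mt_def: "0 = mabs 0"
definition one_mt_def: "1 = mabs (mat 1)"
definition plus_mt_def: "a + b = mabs (mrep a + mrep b)"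
definition minus_mt_def: "a - b = mabs (mrep a - mrep b)"
definition uminus_mt_def: "- a = mabs (- mrep a)"
definition times_mt_def: "a * b = mabs (mrep a ** mrep b)"
definition scaleR_mt_def: "r *\<^sub>R a = mabs (r *\<^sub>R mrep a)"
definition norm_mt_def: "norm a = rn (mrep a)"
definition sgn_mt_def: "sgn (a::'a mt) = inverse (norm a) *\<^sub>R a"
definition dist_mt_def: "dist (a::'a mt) b = norm (a - b)"
definition uniformity_mt_def:
  "(uniformity :: ('a mt \<times> 'a mt) filter) = (INF e\<in>{0 <..}. principal {(x, y). dist x y < e})"
definition open_mt_def:
  "open (U :: 'a mt set) = (\<forall>x\<in>U. \<forall>\<^sub>F (x', y) in uniformity. x' = x \<longrightarrow> y \<in> U)"
instance
proof
  fix a b c :: "'a mt" and r s :: real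
  show "a + b + c = a + (b + c)" by (simp add: plus_mt_def algebra_simps)
  show "a + b = b + a" by (simp add: plus_mt_def algebra_simps)
  show "0 + a = a" by (simp add: plus_mt_def zero_mt_def mrep_inverse)
  show "- a + a = 0" by (simp add: plus_mt_def zero_mt_def uminus_mt_def)
  show "a - b = a + - b" by (simp add: plus_mt_def minus_mt_def uminus_mt_def)
  show "r *\<^sub>R (a + b) = r *\<^sub>R a + r *\<^sub>R b" by (simp add: plus_mt_def scaleR_mt_def algebra_simps)
  show "(r + s) *\<^sub>R a = r *\<^sub>R a + s *\<^sub>R a" by (simp add: plus_mt_def scaleR_mt_def algebra_simps)
  show "r *\<^sub>R s *\<^sub>R a = (r * s) *\<^sub>R a" by (simp add: scaleR_mt_def)
  show "1 *\<^sub>R a = a" by (simp add: scaleR_mt_def mrep_inverse)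
  show "a * b * c = a * (b * c)" by (simp add: times_mt_def matrix_mul_assoc)
  show "1 * a = a" by (simp add: times_mt_def one_mt_def mrep_inverse)
  show "a * 1 = a" by (simp add: times_mt_def one_mt_def mrep_inverse)
  show "(a + b) * c = a * c + b * c"
    by (simp add: times_mt_def plus_mt_def matrix_add_rdistrib')
  show "a * (b + c) = a * b + a * c" by (simp add: times_mt_def plus_mt_def matrix_add_ldistrib)
  show "(0::'a mt) \<noteq> 1"
    by (simp add: zero_mt_def one_mt_def mabs_inject vec_eq_iff mat_def)
  show "r *\<^sub>R a * b = r *\<^sub>R (a * b)" by (simp add: times_mt_def scaleR_mt_def scalar_matrix_assoc)
  show "a * r *\<^sub>R b = r *\<^sub>R (a * b)" by (simp add: times_mt_def scaleR_mt_def matrix_scalar_ac scalar_matrix_assoc)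
  show "dist a b = norm (a - b)" by (simp add: dist_mt_def)
  show "sgn a = inverse (norm a) *\<^sub>R a" by (simp add: sgn_mt_def)
  show "(uniformity :: ('a mt \<times> 'a mt) filter) = (INF e\<in>{0 <..}. principal {(x, y). dist x y < e})"
    by (simp add: uniformity_mt_def)
  show "open (U :: 'a mt set) = (\<forall>x\<in>U. \<forall>\<^sub>F (x', y) in uniformity. x' = x \<longrightarrow> y \<in> U)" for U
    by (simp add: open_mt_def)
  show "(norm a = 0) = (a = 0)" by (simp add: norm_mt_def zero_mt_def rn_zero_iff mt_eq_iff)
  show "norm (a + b) \<le> norm a + norm b" by (simp add: norm_mt_def plus_mt_def rn_add)
  show "norm (r *\<^sub>R a) = \<bar>r\<bar> * norm a" by (simp add: norm_mt_def scaleR_mt_def rn_scale)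
  show "norm (a * b) \<le> norm a * norm b" by (simp add: norm_mt_def times_mt_def rn_mult)
  show "norm (1::'a mt) = 1" by (simp add: norm_mt_def one_mt_def rn_one)
qed
end


lemma bounded_linear_mrep: "bounded_linear (mrep :: 'n::finite mt \<Rightarrow> real^'n^'n)"
proof
  fix a b :: "'n mt" and r :: real
  show "mrep (a + b) = mrep a + mrep b" by (simp add: plus_mt_def)
  show "mrep (r *\<^sub>R a) = r *\<^sub>R mrep a" by (simp add: scaleR_mt_def)
  show "\<exists>K. \<forall>x::'n mt. norm (mrep x) \<le> norm x * K"
    by (rule exI[of _ "real CARD('n)"]) (metis norm_mt_def norm_le_rn mult.commute)
qed

lemma bounded_linear_mabs: "bounded_linear (mabs :: real^'n^'n \<Rightarrow> 'n::finite mt)"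
proof
  fix a b :: "real^'n^'n" and r :: real
  show "mabs (a + b) = mabs a + mabs b" by (simp add: plus_mt_def)
  show "mabs (r *\<^sub>R a) = r *\<^sub>R mabs a" by (simp add: scaleR_mt_def)
  show "\<exists>K. \<forall>x. norm (mabs x :: 'n mt) \<le> norm x * K"
    by (rule exI[of _ "real CARD('n)"]) (metis norm_mt_def mrep_mabs rn_le_norm mult.commute)
qed

instance mt :: (finite) banach
proof
  fix X :: "nat \<Rightarrow> 'a mt"
  assume "Cauchy X"
  then have "Cauchy (\<lambda>n. mrep (X n))" by (rule bounded_linear.Cauchy[OF bounded_linear_mrep])
  then obtain L where "(\<lambda>n. mrep (X n)) \<longlonglongrightarrow> L" using Cauchy_convergent_iff convergent_def by blast
  then have "(\<lambda>n. mabs (mrep (X n))) \<longlonglongrightarrow> mabs L" by (rule bounded_linear.tendsto[OF bounded_linear_mabs])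
  then show "convergent X" by (auto simp: convergent_def mrep_inverse)
qed

lemma mrep_times: "mrep (a * b) = mrep a ** mrep b" by (simp add: times_mt_def)
lemma mrep_one: "mrep 1 = mat 1" by (simp add: one_mt_def)
lemma mrep_zero: "mrep 0 = 0" by (simp add: zero_mt_def)
lemma mrep_scaleR: "mrep (r *\<^sub>R a) = r *\<^sub>R mrep a" by (simp add: scaleR_mt_def)
lemma mrep_add: "mrep (a + b) = mrep a + mrep b" by (simp add: plus_mt_def)
lemma mrep_diff: "mrep (a - b) = mrep a - mrep b" by (simp add: minus_mt_def)
lemma mrep_uminus: "mrep (- b) = - mrep b" by (simp add: uminus_mt_def)
lemma mrep_power: "mrep (a ^ k) = mat_pow (mrep a) k"
proof (induction k)
  case (Suc k)
  have "mrep (a ^ Suc k) = mrep (a ^ k * a)" by (simp only: power_Suc2)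
  then show ?case using Suc by (simp add: mrep_times)
qed (simp add: mrep_one)

lemma mat_exp_mrep: "mat_exp (mrep a) = mrep (exp a)"
proof -
  have "(\<lambda>k. (1 / fact k) *\<^sub>R a ^ k) sums exp a"
    using exp_converges[of a] by (simp add: divide_inverse_commute)
  then have "(\<lambda>k. mrep ((1 / fact k) *\<^sub>R a ^ k)) sums mrep (exp a)"
    by (rule bounded_linear.sums[OF bounded_linear_mrep])
  then show ?thesis unfolding mat_exp_def by (simp add: sums_iff mrep_scaleR mrep_power)
qed

lemma mat_exp_eq: "mat_exp A = mrep (exp (mabs A))"
  using mat_exp_mrep[of "mabs A"] by simp


lemma mabs_scaleR: "mabs (r *\<^sub>R A) = r *\<^sub>R mabs A" by (simp add: scaleR_mt_def mrep_inverse)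
lemma mabs_times: "mabs (A ** B) = mabs A * mabs B" by (simp add: times_mt_def)
lemma mabs_add: "mabs (A + B) = mabs A + mabs B" by (simp add: plus_mt_def)
lemma mabs_diff: "mabs (A - B) = mabs A - mabs B" by (simp add: minus_mt_def)
lemma mabs_zero: "mabs 0 = 0" by (simp add: zero_mt_def)
lemma mabs_one: "mabs (mat 1) = 1" by (simp add: one_mt_def)

lemma mat_exp_zero: "mat_exp (0::real^'n^'n) = mat 1"
  by (simp add: mat_exp_eq mabs_zero mrep_one)

lemma mat_exp_add: "mat_exp ((s + t) *\<^sub>R A) = mat_exp (s *\<^sub>R A) ** mat_exp (t *\<^sub>R A)"
proof -
  have "exp ((s + t) *\<^sub>R mabs A) = exp (s *\<^sub>R mabs A) * exp (t *\<^sub>R mabs A)"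
    by (simp add: scaleR_add_left exp_add_commuting)
  then show ?thesis by (simp add: mat_exp_eq mabs_scaleR mrep_times)
qed

lemma mat_exp_comm: "mat_exp (s *\<^sub>R A) ** mat_exp (t *\<^sub>R A) = mat_exp (t *\<^sub>R A) ** mat_exp (s *\<^sub>R A)"
  by (metis mat_exp_add add.commute)

lemma mat_exp_inv: "mat_exp ((- t) *\<^sub>R A) ** mat_exp (t *\<^sub>R A) = mat 1"
  by (metis mat_exp_add add.left_inverse scaleR_zero_left mat_exp_zero)

lemma mat_exp_inv': "mat_exp (t *\<^sub>R A) ** mat_exp ((- t) *\<^sub>R A) = mat 1"
  by (metis mat_exp_comm mat_exp_inv)

lemma exp_scaleR_commute: "exp (t *\<^sub>R (a::'b::{real_normed_algebra_1,banach})) * a = a * exp (t *\<^sub>R a)"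
proof (cases "t = 0")
  case False
  have "exp (t *\<^sub>R a) * (t *\<^sub>R a) = (t *\<^sub>R a) * exp (t *\<^sub>R a)" by (rule exp_times_arg_commute)
  then have "t *\<^sub>R (exp (t *\<^sub>R a) * a) = t *\<^sub>R (a * exp (t *\<^sub>R a))" by simp
  then show ?thesis using False by simp
qed simp

lemma mat_exp_commA: "mat_exp (t *\<^sub>R A) ** A = A ** mat_exp (t *\<^sub>R A)"
proof -
  have "exp (t *\<^sub>R mabs A) * mabs A = mabs A * exp (t *\<^sub>R mabs A)" by (rule exp_scaleR_commute)
  then have "mrep (exp (t *\<^sub>R mabs A) * mabs A) = mrep (mabs A * exp (t *\<^sub>R mabs A))" by simp
  then show ?thesis by (simp add: mat_exp_eq mabs_scaleR mrep_times)
qed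

lemma mat_exp_deriv_right:
  "((\<lambda>t. mat_exp (t *\<^sub>R A)) has_vector_derivative mat_exp (t *\<^sub>R A) ** A) (at t within S)"
proof -
  have "((\<lambda>t. mrep (exp (t *\<^sub>R mabs A))) has_vector_derivative mrep (exp (t *\<^sub>R mabs A) * mabs A)) (at t within S)"
    by (rule bounded_linear.has_vector_derivative[OF bounded_linear_mrep exp_scaleR_has_vector_derivative_right])
  then show ?thesis by (simp add: mat_exp_eq mabs_scaleR mrep_times)
qed

lemma mat_exp_deriv_left:
  "((\<lambda>t. mat_exp (t *\<^sub>R A)) has_vector_derivative A ** mat_exp (t *\<^sub>R A)) (at t within S)"
  using mat_exp_deriv_right[of A t S] by (simp add: mat_exp_commA)

lemma mat_exp_cont: "continuous_on S (\<lambda>t. mat_exp (t *\<^sub>R A))"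
  by (rule continuous_on_vector_derivative) (rule mat_exp_deriv_right)

lemma bilinear_mm: "bilinear ((**) :: real^'n^'m \<Rightarrow> real^'p^'n \<Rightarrow> real^'p^'m)"
  unfolding bilinear_def
  by (auto intro!: linearI simp: matrix_add_ldistrib matrix_add_rdistrib' matrix_scalar_ac scalar_matrix_assoc)

lemma bb_mm: "bounded_bilinear ((**) :: real^'n^'m \<Rightarrow> real^'p^'n \<Rightarrow> real^'p^'m)"
  using bilinear_mm bilinear_conv_bounded_bilinear by blast

lemma bilinear_vm: "bilinear ((v*) :: real^'m \<Rightarrow> real^'n^'m \<Rightarrow> real^'n)"
  unfolding bilinear_def
  by (auto intro!: linearI simp: vector_matrix_left_distrib vector_matrix_mult_add_rdistrib
      scaleR_vector_matrix_assoc vector_scaleR_matrix_ac)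

lemma bb_vm: "bounded_bilinear ((v*) :: real^'m \<Rightarrow> real^'n^'m \<Rightarrow> real^'n)"
  using bilinear_vm bilinear_conv_bounded_bilinear by blast

definition nonneg_mat :: "real^'n^'n \<Rightarrow> bool" where
  "nonneg_mat A \<longleftrightarrow> (\<forall>i j. 0 \<le> A$i$j)"

lemma nonneg_mult: "nonneg_mat A \<Longrightarrow> nonneg_mat B \<Longrightarrow> nonneg_mat (A ** B)"
  unfolding nonneg_mat_def matrix_matrix_mult_def by (auto intro!: sum_nonneg)

lemma nonneg_one: "nonneg_mat (mat 1)"
  unfolding nonneg_mat_def mat_def by auto

lemma nonneg_pow: "nonneg_mat A \<Longrightarrow> nonneg_mat (mat_pow A k)"
  by (induction k) (auto intro: nonneg_mult nonneg_one)

lemma mat_pow_scaleR: "mat_pow (t *\<^sub>R A) k = (t ^ k) *\<^sub>R mat_pow A k"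
  by (induction k) (simp_all add: matrix_scalar_ac scalar_matrix_assoc)

lemma mat_exp_sums: "(\<lambda>k. (1 / fact k) *\<^sub>R mat_pow A k) sums mat_exp A"
proof -
  have "(\<lambda>k. (1 / fact k) *\<^sub>R (mabs A) ^ k) sums exp (mabs A)"
    using exp_converges[of "mabs A"] by (simp add: divide_inverse_commute)
  then have "(\<lambda>k. mrep ((1 / fact k) *\<^sub>R (mabs A) ^ k)) sums mrep (exp (mabs A))"
    by (rule bounded_linear.sums[OF bounded_linear_mrep])
  then show ?thesis by (simp add: mat_exp_eq mrep_scaleR mrep_power)
qed

lemma bounded_linear_entry: "bounded_linear (\<lambda>A::real^'n^'m. A $ i $ j)"
  by (rule bounded_linear_compose[OF bounded_linear_vec_nth bounded_linear_vec_nth])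

lemma mat_exp_entry_sums: "(\<lambda>k. (1 / fact k) * mat_pow A k $ i $ j) sums (mat_exp A $ i $ j)"
  using bounded_linear.sums[OF bounded_linear_entry mat_exp_sums[of A], of i j] by simp

lemma mat_exp_nonneg_ge:
  assumes "nonneg_mat Q"
  shows "(1 / fact m) * mat_pow Q m $ i $ j \<le> mat_exp Q $ i $ j"
proof -
  have s: "summable (\<lambda>k. (1 / fact k) * mat_pow Q k $ i $ j)"
    using mat_exp_entry_sums sums_summable by blast
  have "sum (\<lambda>k. (1 / fact k) * mat_pow Q k $ i $ j) {m} \<le> (\<Sum>k. (1 / fact k) * mat_pow Q k $ i $ j)"
    by (rule sum_le_suminf[OF s]) (use nonneg_pow[OF assms] in \<open>auto simp: nonneg_mat_def\<close>)
  then show ?thesis using mat_exp_entry_sums[of Q i j] by (simp add: sums_iff)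
qed

lemma mat_exp_nonneg: "nonneg_mat Q \<Longrightarrow> nonneg_mat (mat_exp Q)"
  unfolding nonneg_mat_def
proof (intro allI)
  fix i j assume "\<forall>i j. 0 \<le> Q $ i $ j"
  then have "nonneg_mat Q" by (simp add: nonneg_mat_def)
  from mat_exp_nonneg_ge[OF this, of 0 i j] show "0 \<le> mat_exp Q $ i $ j"
    by (simp add: mat_def split: if_splits)
qed

lemma mat_exp_shift: "mat_exp (t *\<^sub>R (A - c *\<^sub>R mat 1)) = exp (- t * c) *\<^sub>R mat_exp (t *\<^sub>R A)"
proof -
  have e: "mabs (t *\<^sub>R (A - c *\<^sub>R mat 1)) = t *\<^sub>R mabs A + of_real (- t * c)"
    by (simp add: mabs_scaleR mabs_diff mabs_one of_real_def algebra_simps)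
  have "exp (t *\<^sub>R mabs A + of_real (- t * c)) = exp (t *\<^sub>R mabs A) * exp (of_real (- t * c))"
    by (rule exp_add_commuting) (simp add: of_real_def)
  also have "\<dots> = exp (- t * c) *\<^sub>R exp (t *\<^sub>R mabs A)"
  proof -
    have "exp (of_real (- t * c) :: 'a mt) = of_real (exp (- t * c))" by (rule exp_of_real)
    then show ?thesis by (simp add: of_real_def)
  qed
  finally have calc: "exp (t *\<^sub>R mabs A + of_real (- t * c)) = exp (- t * c) *\<^sub>R exp (t *\<^sub>R mabs A)" .
  have "mat_exp (t *\<^sub>R (A - c *\<^sub>R mat 1)) = mrep (exp (t *\<^sub>R mabs A + of_real (- t * c)))"
    by (simp only: mat_exp_eq e)
  also have "\<dots> = exp (- t * c) *\<^sub>R mrep (exp (t *\<^sub>R mabs A))"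
    by (simp only: calc mrep_scaleR)
  also have "\<dots> = exp (- t * c) *\<^sub>R mat_exp (t *\<^sub>R A)"
    by (simp only: mat_exp_eq mabs_scaleR)
  finally show ?thesis .
qed


lemma irr_pos:
  assumes irr: "irreducible_gen G" and nn: "nonneg_mat Q"
    and off: "\<And>i j. i \<noteq> j \<Longrightarrow> Q$i$j = G$i$j"
  shows "\<exists>m. 0 < mat_pow Q m $ i $ j"
proof (cases "i = j")
  case True
  then show ?thesis by (intro exI[of _ 0]) (simp add: mat_def)
next
  case False
  let ?R = "{(a, b). a \<noteq> b \<and> G $ a $ b > 0}"
  from irr False have "(i, j) \<in> ?R\<^sup>+" by (simp add: irreducible_gen_def)
  then show ?thesis
  proof (induction rule: trancl_induct)
    case (base y)
    then have "0 < mat_pow Q 1 $ i $ y" using off by simp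
    then show ?case by blast
  next
    case (step y z)
    then obtain m where m: "0 < mat_pow Q m $ i $ y" by blast
    from step have yz: "0 < Q $ y $ z" using off by auto
    have "mat_pow Q m $ i $ y * Q $ y $ z \<le> (\<Sum>k\<in>UNIV. mat_pow Q m $ i $ k * Q $ k $ z)"
      by (rule member_le_sum)
        (use nonneg_pow[OF nn, of m] nn in \<open>auto simp: nonneg_mat_def\<close>)
    also have "\<dots> = mat_pow Q (Suc m) $ i $ z" by (simp add: matrix_matrix_mult_def)
    finally have "0 < mat_pow Q (Suc m) $ i $ z"
      using m yz by (meson mult_pos_pos order_less_le_trans)
    then show ?case by blast
  qed
qed

lemma mat_pow_row1: "A *v 1 = 0 \<Longrightarrow> mat_pow A k *v 1 = (if k = 0 then 1 else 0)"
  by (induction k) (auto simp: matrix_vector_mul_assoc[symmetric])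

lemma mat_pow_stat: "p v* A = 0 \<Longrightarrow> p v* mat_pow A k = (if k = 0 then p else 0)"
  by (induction k) (auto simp: vector_matrix_mul_assoc[symmetric])

lemma bounded_linear_mv: "bounded_linear (\<lambda>A::real^'n^'m. A *v v)"
proof -
  have "linear (\<lambda>A::real^'n^'m. A *v v)"
    by (rule linearI) (simp_all add: matrix_vector_mult_add_rdistrib scaleR_matrix_vector_assoc)
  then show ?thesis by (simp add: linear_conv_bounded_linear)
qed

lemma bounded_linear_vm: "bounded_linear (\<lambda>A::real^'n^'m. p v* A)"
  using bb_vm bounded_bilinear.bounded_linear_right by blast

lemma mat_exp_row1: "A *v 1 = 0 \<Longrightarrow> mat_exp A *v 1 = 1"
proof -
  assume a: "A *v 1 = 0"
  have "(\<lambda>k. ((1 / fact k) *\<^sub>R mat_pow A k) *v 1) sums (mat_exp A *v 1)"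
    by (rule bounded_linear.sums[OF bounded_linear_mv mat_exp_sums])
  moreover have "(\<lambda>k. ((1 / fact k) *\<^sub>R mat_pow A k) *v 1) = (\<lambda>k. if k = 0 then 1 else 0)"
    by (rule ext) (simp add: scaleR_matrix_vector_assoc[symmetric] mat_pow_row1[OF a])
  ultimately show ?thesis using sums_single[of 0 "\<lambda>_. 1::real^'a"] sums_unique2 by fastforce
qed

lemma mat_exp_stat: "p v* A = 0 \<Longrightarrow> p v* mat_exp A = p"
proof -
  assume a: "p v* A = 0"
  have "(\<lambda>k. p v* ((1 / fact k) *\<^sub>R mat_pow A k)) sums (p v* mat_exp A)"
    by (rule bounded_linear.sums[OF bounded_linear_vm mat_exp_sums])
  moreover have "(\<lambda>k. p v* ((1 / fact k) *\<^sub>R mat_pow A k)) = (\<lambda>k. if k = 0 then p else 0)"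
    by (rule ext) (simp add: vector_scaleR_matrix_ac mat_pow_stat[OF a])
  ultimately show ?thesis using sums_single[of 0 "\<lambda>_. p"] sums_unique2 by fastforce
qed


lemma contract_sum:
  fixes a b x :: "'n::finite \<Rightarrow> real"
  assumes a: "\<And>l. 0 \<le> a l" and b: "\<And>l. 0 \<le> b l" and sa: "sum a UNIV = r" and sb: "sum b UNIV = r"
    and r: "0 < r" and x: "\<And>l l'. \<bar>x l - x l'\<bar> \<le> e"
  shows "\<bar>\<Sum>l\<in>UNIV. (a l - b l) * x l\<bar> \<le> r * e"
proof -
  have 1: "r * (\<Sum>l\<in>UNIV. a l * x l) = (\<Sum>l\<in>UNIV. \<Sum>l'\<in>UNIV. a l * b l' * x l)"
    unfolding sb[symmetric] sum_product by (subst sum.swap) (simp add: mult_ac)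
  have 2: "r * (\<Sum>l'\<in>UNIV. b l' * x l') = (\<Sum>l\<in>UNIV. \<Sum>l'\<in>UNIV. a l * b l' * x l')"
    unfolding sa[symmetric] sum_product by (simp add: mult_ac)
  have "r * (\<Sum>l\<in>UNIV. (a l - b l) * x l) = r * (\<Sum>l\<in>UNIV. a l * x l) - r * (\<Sum>l\<in>UNIV. b l * x l)"
    by (simp add: sum_subtractf left_diff_distrib right_diff_distrib)
  also have "\<dots> = (\<Sum>l\<in>UNIV. \<Sum>l'\<in>UNIV. a l * b l' * (x l - x l'))"
    unfolding 1 2 by (simp add: sum_subtractf right_diff_distrib)
  finally have eq: "r * (\<Sum>l\<in>UNIV. (a l - b l) * x l) = (\<Sum>l\<in>UNIV. \<Sum>l'\<in>UNIV. a l * b l' * (x l - x l'))" .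
  have "r * \<bar>\<Sum>l\<in>UNIV. (a l - b l) * x l\<bar> = \<bar>r * (\<Sum>l\<in>UNIV. (a l - b l) * x l)\<bar>"
    using r by (simp add: abs_mult)
  also have "\<dots> = \<bar>\<Sum>l\<in>UNIV. \<Sum>l'\<in>UNIV. a l * b l' * (x l - x l')\<bar>" by (simp only: eq)
  also have "\<bar>\<Sum>l\<in>UNIV. \<Sum>l'\<in>UNIV. a l * b l' * (x l - x l')\<bar> \<le> (\<Sum>l\<in>UNIV. \<Sum>l'\<in>UNIV. a l * b l' * e)"
  proof -
    have "\<bar>\<Sum>l\<in>UNIV. \<Sum>l'\<in>UNIV. a l * b l' * (x l - x l')\<bar> \<le> (\<Sum>l\<in>UNIV. \<Sum>l'\<in>UNIV. \<bar>a l * b l' * (x l - x l')\<bar>)"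
      by (rule order_trans[OF sum_abs]) (intro sum_mono sum_abs)
    also have "\<dots> \<le> (\<Sum>l\<in>UNIV. \<Sum>l'\<in>UNIV. a l * b l' * e)"
      by (intro sum_mono) (simp add: abs_mult a b mult_left_mono x mult_nonneg_nonneg)
    finally show ?thesis .
  qed
  also have "\<dots> = e * (r * r)"
    using sa sb by (simp add: sum_distrib_left[symmetric] sum_distrib_right[symmetric] mult_ac)
  finally have "r * \<bar>\<Sum>l\<in>UNIV. (a l - b l) * x l\<bar> \<le> r * (r * e)"
    by (simp add: mult_ac)
  then show ?thesis using r by simp
qed


lemma row_sum_eq: "(A *v 1) $ i = (\<Sum>j\<in>UNIV. A $ i $ j)"
  by (simp add: matrix_vector_mult_def)

lemma contract_step:
  fixes P M :: "real^'n^'n"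
  assumes Pd: "\<And>i j. \<delta> \<le> P $ i $ j" and Pr: "P *v 1 = 1" and r: "0 < 1 - real CARD('n) * \<delta>"
    and M: "\<And>l l'. \<bar>M $ l $ j - M $ l' $ j\<bar> \<le> e"
  shows "\<bar>(P ** M) $ i $ j - (P ** M) $ k $ j\<bar> \<le> (1 - real CARD('n) * \<delta>) * e"
proof -
  have rs: "\<And>i. (\<Sum>l\<in>UNIV. P $ i $ l) = 1" using Pr row_sum_eq[of P] by (metis vec_eq_iff one_index)
  have "(P ** M) $ i $ j - (P ** M) $ k $ j = (\<Sum>l\<in>UNIV. ((P$i$l - \<delta>) - (P$k$l - \<delta>)) * M $ l $ j)"
    by (simp add: matrix_matrix_mult_def sum_subtractf[symmetric] left_diff_distrib)
  also have "\<bar>\<dots>\<bar> \<le> (1 - real CARD('n) * \<delta>) * e"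
  proof (rule contract_sum)
    show "sum (\<lambda>l. P$i$l - \<delta>) UNIV = 1 - real CARD('n) * \<delta>" using rs[of i] by (simp add: sum_subtractf)
    show "sum (\<lambda>l. P$k$l - \<delta>) UNIV = 1 - real CARD('n) * \<delta>" using rs[of k] by (simp add: sum_subtractf)
  qed (use Pd r M in auto)
  finally show ?thesis .
qed

lemma ergodic:
  fixes G :: "real^'n^'n" and p :: "real^'n"
  assumes off: "\<And>i j. i \<noteq> j \<Longrightarrow> 0 \<le> G$i$j" and row: "G *v 1 = 0" and irr: "irreducible_gen G"
    and stat: "p v* G = 0" and ps: "(\<Sum>i\<in>UNIV. p $ i) = 1"
  shows "\<exists>C a. 0 < a \<and> (\<forall>t\<ge>0. \<forall>i j. \<bar>mat_exp (t *\<^sub>R G) $ i $ j - p $ j\<bar> \<le> C * exp (- a * t))"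
proof -
  define c where "c = (\<Sum>i\<in>UNIV. \<bar>G$i$i\<bar>) + 1"
  define Q where "Q = G + c *\<^sub>R mat 1"
  have GQ: "G = Q - c *\<^sub>R mat 1" by (simp add: Q_def)
  have Qoff: "\<And>i j. i \<noteq> j \<Longrightarrow> Q$i$j = G$i$j" by (simp add: Q_def mat_def)
  have Qnn: "nonneg_mat Q"
    unfolding nonneg_mat_def
  proof (intro allI)
    fix i j
    show "0 \<le> Q$i$j"
    proof (cases "i = j")
      case True
      have "\<bar>G$i$i\<bar> \<le> (\<Sum>i\<in>UNIV. \<bar>G$i$i\<bar>)" by (rule member_le_sum) auto
      then show ?thesis using True by (simp add: Q_def mat_def c_def)
    next
      case False then show ?thesis using off Qoff by simp
    qed
  qed
  define E where "E t = mat_exp (t *\<^sub>R G)" for t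
  have Eq: "E t = exp (- t * c) *\<^sub>R mat_exp (t *\<^sub>R Q)" for t
    unfolding E_def GQ by (rule mat_exp_shift)
  have Enn: "0 \<le> E t $ i $ j" if "0 \<le> t" for t i j
  proof -
    have "nonneg_mat (t *\<^sub>R Q)" using Qnn that by (simp add: nonneg_mat_def)
    from mat_exp_nonneg[OF this] have "0 \<le> mat_exp (t *\<^sub>R Q) $ i $ j" by (simp add: nonneg_mat_def)
    then show ?thesis by (simp add: Eq)
  qed
  have Erow: "E t *v 1 = 1" for t
    unfolding E_def by (rule mat_exp_row1) (simp add: scaleR_matrix_vector_assoc[symmetric] row)
  have Ers: "(\<Sum>j\<in>UNIV. E t $ i $ j) = 1" for t i
    using Erow[of t] row_sum_eq[of "E t"] by (metis vec_eq_iff one_index)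
  have Ele1: "E t $ i $ j \<le> 1" if "0 \<le> t" for t i j
  proof -
    have "E t $ i $ j \<le> (\<Sum>j\<in>UNIV. E t $ i $ j)" by (rule member_le_sum) (use Enn that in auto)
    then show ?thesis using Ers by simp
  qed
  have Epos: "0 < E 1 $ i $ j" for i j
  proof -
    obtain m where m: "0 < mat_pow Q m $ i $ j" using irr_pos[OF irr Qnn Qoff] by blast
    have "0 < (1 / fact m) * mat_pow (1 *\<^sub>R Q) m $ i $ j" using m by simp
    also have "\<dots> \<le> mat_exp (1 *\<^sub>R Q) $ i $ j" by (rule mat_exp_nonneg_ge) (simp add: Qnn)
    finally show ?thesis by (simp add: Eq)
  qed
  define \<delta> where "\<delta> = Min (range (\<lambda>(i, j). E 1 $ i $ j)) / 2"
  have \<delta>pos: "0 < \<delta>"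
    unfolding \<delta>_def using Epos by (subst zero_less_divide_iff) (auto simp: Min_gr_iff)
  have \<delta>le: "2 * \<delta> \<le> E 1 $ i $ j" for i j
  proof -
    have "E 1 $ i $ j \<in> range (\<lambda>(i, j). E 1 $ i $ j)" by (rule range_eqI[of _ _ "(i, j)"]) simp
    then have "Min (range (\<lambda>(i, j). E 1 $ i $ j)) \<le> E 1 $ i $ j" by (intro Min_le) auto
    then show ?thesis unfolding \<delta>_def by simp
  qed
  have \<delta>le1: "\<delta> \<le> E 1 $ i $ j" for i j using \<delta>le[of i j] \<delta>pos by simp
  have n\<delta>: "2 * (real CARD('n) * \<delta>) \<le> 1"
  proof -
    obtain i :: 'n where True by simp
    have "(\<Sum>j\<in>(UNIV::'n set). 2 * \<delta>) \<le> (\<Sum>j\<in>UNIV. E 1 $ i $ j)" by (intro sum_mono \<delta>le)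
    then show ?thesis using Ers by simp
  qed
  define \<rho> where "\<rho> = 1 - real CARD('n) * \<delta>"
  have \<rho>pos: "0 < \<rho>" and \<rho>lt: "\<rho> < 1" using n\<delta> \<delta>pos by (auto simp: \<rho>_def)
  have osc: "\<forall>s\<ge>0. \<forall>i k j. \<bar>E (real m + s) $ i $ j - E (real m + s) $ k $ j\<bar> \<le> \<rho> ^ m" for m
  proof (induction m)
    case 0
    show ?case
    proof (intro allI impI)
      fix s :: real and i k j assume "0 \<le> s"
      then show "\<bar>E (real 0 + s) $ i $ j - E (real 0 + s) $ k $ j\<bar> \<le> \<rho> ^ 0"
        using Enn[of s] Ele1[of s] by (simp add: abs_le_iff) (smt (verit))
    qed
  next
    case (Suc m)
    show ?case
    proof (intro allI impI)
      fix s :: real and i k j assume s: "0 \<le> s"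
      have "E (real (Suc m) + s) = E 1 ** E (real m + s)"
        unfolding E_def using mat_exp_add[of 1 "real m + s" G] by (simp add: add_ac)
      moreover have "\<bar>(E 1 ** E (real m + s)) $ i $ j - (E 1 ** E (real m + s)) $ k $ j\<bar> \<le> \<rho> * \<rho> ^ m"
        unfolding \<rho>_def
        by (rule contract_step) (use \<delta>le1 \<delta>pos Erow n\<delta> Suc s in \<open>auto simp: \<rho>_def\<close>)
      ultimately show "\<bar>E (real (Suc m) + s) $ i $ j - E (real (Suc m) + s) $ k $ j\<bar> \<le> \<rho> ^ Suc m"
        by simp
    qed
  qed
  define S where "S = (\<Sum>k\<in>UNIV. \<bar>p $ k\<bar>)"
  have Estat: "p v* E t = p" for t
    unfolding E_def by (rule mat_exp_stat) (simp add: vector_scaleR_matrix_ac stat)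
  have bnd: "\<bar>E t $ i $ j - p $ j\<bar> \<le> S * \<rho> ^ nat \<lfloor>t\<rfloor>" if t: "0 \<le> t" for t i j
  proof -
    define m where "m = nat \<lfloor>t\<rfloor>"
    define s where "s = t - real m"
    have s0: "0 \<le> s" and ts: "t = real m + s" using t by (auto simp: s_def m_def)
    have pj: "p $ j = (\<Sum>k\<in>UNIV. p $ k * E t $ k $ j)"
    proof -
      have "(p v* E t) $ j = (\<Sum>k\<in>UNIV. p $ k * E t $ k $ j)" by (simp add: vector_matrix_mult_def)
      then show ?thesis using Estat[of t] by simp
    qed
    have "E t $ i $ j - p $ j = (\<Sum>k\<in>UNIV. p $ k * (E t $ i $ j - E t $ k $ j))"
    proof -
      have "(\<Sum>k\<in>UNIV. p $ k * (E t $ i $ j - E t $ k $ j)) = (\<Sum>k\<in>UNIV. p $ k) * E t $ i $ j - (\<Sum>k\<in>UNIV. p $ k * E t $ k $ j)"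
        by (simp add: right_diff_distrib sum_subtractf sum_distrib_right)
      then show ?thesis using ps pj by simp
    qed
    also have "\<bar>\<dots>\<bar> \<le> (\<Sum>k\<in>UNIV. \<bar>p $ k\<bar> * \<rho> ^ m)"
      by (rule order_trans[OF sum_abs], rule sum_mono)
        (use osc[of m] s0 in \<open>auto simp: abs_mult ts intro!: mult_left_mono\<close>)
    also have "\<dots> = S * \<rho> ^ m" by (simp add: S_def sum_distrib_right)
    finally show ?thesis by (simp add: m_def)
  qed
  define a where "a = - ln \<rho>"
  have apos: "0 < a" using \<rho>pos \<rho>lt by (simp add: a_def)
  have pw: "\<rho> ^ nat \<lfloor>t\<rfloor> \<le> exp a * exp (- a * t)" if t: "0 \<le> t" for t
  proof -
    have "\<rho> ^ nat \<lfloor>t\<rfloor> = exp (real (nat \<lfloor>t\<rfloor>) * ln \<rho>)"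
      using \<rho>pos by (simp add: exp_of_nat_mult)
    also have "\<dots> \<le> exp ((t - 1) * ln \<rho>)"
    proof -
      have "t - 1 \<le> real (nat \<lfloor>t\<rfloor>)" using t by linarith
      moreover have "ln \<rho> < 0" using \<rho>pos \<rho>lt by simp
      ultimately show ?thesis by (intro exp_mono) (simp add: mult_right_mono_neg)
    qed
    also have "\<dots> = exp a * exp (- a * t)" by (simp add: a_def exp_add[symmetric] algebra_simps)
    finally show ?thesis .
  qed
  have S0: "0 \<le> S" by (simp add: S_def sum_nonneg)
  show ?thesis
  proof (intro exI conjI allI impI)
    show "0 < a" by (rule apos)
    fix t :: real and i j assume t: "0 \<le> t"
    have "\<bar>mat_exp (t *\<^sub>R G) $ i $ j - p $ j\<bar> \<le> S * \<rho> ^ nat \<lfloor>t\<rfloor>" using bnd[OF t] by (simp add: E_def)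
    also have "\<dots> \<le> S * (exp a * exp (- a * t))" by (rule mult_left_mono[OF pw[OF t] S0])
    finally show "\<bar>mat_exp (t *\<^sub>R G) $ i $ j - p $ j\<bar> \<le> (S * exp a) * exp (- a * t)" by (simp add: mult_ac)
  qed
qed

lemma bb_mm_bound: "\<exists>K>0. \<forall>a b. norm ((a::real^'n^'m) ** (b::real^'p^'n)) \<le> norm a * norm b * K"
  using bounded_bilinear.pos_bounded[OF bb_mm] by blast

lemma bl_mm_left: "bounded_linear (\<lambda>A::real^'n^'m. A ** (B::real^'p^'n))"
  using bounded_bilinear.bounded_linear_left[OF bb_mm] .

lemma bl_mm_right: "bounded_linear (\<lambda>B::real^'p^'n. (A::real^'n^'m) ** B)"
  using bounded_bilinear.bounded_linear_right[OF bb_mm] .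

lemma mat_exp_diff: "mat_exp ((t - s) *\<^sub>R A) = mat_exp ((- s) *\<^sub>R A) ** mat_exp (t *\<^sub>R A)"
  using mat_exp_add[of "- s" t A] by simp

lemma map_P_Suc_alt:
  assumes int: "(\<lambda>s. map_P L0 L1 k s ** L1 ** mat_exp ((- s) *\<^sub>R L0)) integrable_on {0..t}"
  shows "map_P L0 L1 (Suc k) t =
    integral {0..t} (\<lambda>s. map_P L0 L1 k s ** L1 ** mat_exp ((- s) *\<^sub>R L0)) ** mat_exp (t *\<^sub>R L0)"
proof -
  have "map_P L0 L1 (Suc k) t =
      integral {0..t} ((\<lambda>X. X ** mat_exp (t *\<^sub>R L0)) \<circ> (\<lambda>s. map_P L0 L1 k s ** L1 ** mat_exp ((- s) *\<^sub>R L0)))"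
  proof -
    have "\<And>s. map_P L0 L1 k s ** L1 ** mat_exp ((t - s) *\<^sub>R L0) =
       (map_P L0 L1 k s ** L1 ** mat_exp ((- s) *\<^sub>R L0)) ** mat_exp (t *\<^sub>R L0)"
      by (simp add: mat_exp_diff matrix_mul_assoc)
    then show ?thesis by (simp add: o_def)
  qed
  also have "\<dots> = integral {0..t} (\<lambda>s. map_P L0 L1 k s ** L1 ** mat_exp ((- s) *\<^sub>R L0)) ** mat_exp (t *\<^sub>R L0)"
    by (rule integral_linear[OF int bl_mm_left])
  finally show ?thesis .
qed


lemma mat_exp_inv_n: "mat_exp (- (t *\<^sub>R A)) ** mat_exp (t *\<^sub>R A) = mat 1"
  using mat_exp_inv[of t A] by simp

lemma mat_exp_inv_n': "mat_exp (t *\<^sub>R A) ** mat_exp (- (t *\<^sub>R A)) = mat 1"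
  using mat_exp_inv'[of t A] by simp

lemma mm_continuous_on:
  "continuous_on S f \<Longrightarrow> continuous_on S g \<Longrightarrow> continuous_on S (\<lambda>x. (f x :: real^'n^'m) ** (g x :: real^'p^'n))"
  by (rule bounded_bilinear.continuous_on[OF bb_mm])

lemma map_P_deriv:
  "\<forall>t\<in>{0..T}. (map_P L0 L1 k has_vector_derivative
     (map_P L0 L1 k t ** L0 + (if k = 0 then 0 else map_P L0 L1 (k - 1) t ** L1))) (at t within {0..T})"
proof (induction k)
  case 0
  show ?case using mat_exp_deriv_right[of L0] by simp
next
  case (Suc k)
  let ?g = "\<lambda>s. map_P L0 L1 k s ** L1 ** mat_exp ((- s) *\<^sub>R L0)"
  have contP: "continuous_on {0..T} (map_P L0 L1 k)"
    by (rule continuous_on_vector_derivative) (use Suc.IH in blast)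
  have contE: "continuous_on {0..T} (\<lambda>s. mat_exp ((- s) *\<^sub>R L0))"
    using mat_exp_cont[of "{0..T}" "- L0"] by simp
  have contg: "continuous_on {0..T} ?g"
    by (intro mm_continuous_on contP contE continuous_on_const)
  have eq: "map_P L0 L1 (Suc k) u = integral {0..u} ?g ** mat_exp (u *\<^sub>R L0)" if u: "u \<in> {0..T}" for u
  proof (rule map_P_Suc_alt)
    show "?g integrable_on {0..u}"
      by (rule integrable_continuous_interval, rule continuous_on_subset[OF contg]) (use u in auto)
  qed
  show ?case
  proof
    fix t assume t: "t \<in> {0..T}"
    have dH: "((\<lambda>u. integral {0..u} ?g) has_vector_derivative ?g t) (at t within {0..T})"
      by (rule integral_has_vector_derivative[OF contg t])
    have dE: "((\<lambda>u. mat_exp (u *\<^sub>R L0)) has_vector_derivative mat_exp (t *\<^sub>R L0) ** L0) (at t within {0..T})"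
      by (rule mat_exp_deriv_right)
    have d: "((\<lambda>u. integral {0..u} ?g ** mat_exp (u *\<^sub>R L0)) has_vector_derivative
         (integral {0..t} ?g ** (mat_exp (t *\<^sub>R L0) ** L0) + ?g t ** mat_exp (t *\<^sub>R L0))) (at t within {0..T})"
      by (rule bounded_bilinear.has_vector_derivative[OF bb_mm dH dE])
    have val: "integral {0..t} ?g ** (mat_exp (t *\<^sub>R L0) ** L0) + ?g t ** mat_exp (t *\<^sub>R L0) =
        map_P L0 L1 (Suc k) t ** L0 + map_P L0 L1 k t ** L1"
      using eq[OF t] by (simp add: matrix_mul_assoc[symmetric] mat_exp_inv_n)
    have "(map_P L0 L1 (Suc k) has_vector_derivative
         (integral {0..t} ?g ** (mat_exp (t *\<^sub>R L0) ** L0) + ?g t ** mat_exp (t *\<^sub>R L0))) (at t within {0..T})"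
      by (rule has_vector_derivative_transform[OF t eq d])
    then show "(map_P L0 L1 (Suc k) has_vector_derivative
         (map_P L0 L1 (Suc k) t ** L0 + (if Suc k = 0 then 0 else map_P L0 L1 (Suc k - 1) t ** L1))) (at t within {0..T})"
      using val by simp
  qed
qed


lemma poly_integral:
  fixes t \<beta> B :: real
  assumes "0 \<le> t"
  shows "((\<lambda>s. \<beta> * B * (\<beta> * s) ^ k / fact k) has_integral (B * (\<beta> * t) ^ Suc k / fact (Suc k))) {0..t}"
proof -
  have "((\<lambda>s. \<beta> * B * (\<beta> * s) ^ k / fact k) has_integral
      (B * (\<beta> * t) ^ Suc k / fact (Suc k) - B * (\<beta> * 0) ^ Suc k / fact (Suc k))) {0..t}"
  proof (rule fundamental_theorem_of_calculus[OF assms])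
    fix x assume "x \<in> {0..t}"
    define c where "c = B * \<beta> ^ Suc k / fact (Suc k)"
    have f: "(\<lambda>s. B * (\<beta> * s) ^ Suc k / fact (Suc k)) = (\<lambda>s. c * s ^ Suc k)"
      by (simp add: c_def power_mult_distrib mult_ac)
    have D1: "((\<lambda>s. c * s ^ Suc k) has_real_derivative c * (real (Suc k) * x ^ k)) (at x)"
      by (intro DERIV_cmult) (use DERIV_pow[of "Suc k" x] in simp)
    have eq: "c * (real (Suc k) * x ^ k) = \<beta> * B * (\<beta> * x) ^ k / fact k"
      by (simp add: c_def power_mult_distrib field_simps del: of_nat_Suc)
    have "((\<lambda>s. c * s ^ Suc k) has_real_derivative \<beta> * B * (\<beta> * x) ^ k / fact k) (at x)"
      using D1 unfolding eq .
    then have "((\<lambda>s. B * (\<beta> * s) ^ Suc k / fact (Suc k)) has_real_derivative \<beta> * B * (\<beta> * x) ^ k / fact k) (at x)"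
      unfolding f .
    then have "((\<lambda>s. B * (\<beta> * s) ^ Suc k / fact (Suc k)) has_real_derivative \<beta> * B * (\<beta> * x) ^ k / fact k) (at x within {0..t})"
      by (rule has_field_derivative_at_within)
    then show "((\<lambda>s. B * (\<beta> * s) ^ Suc k / fact (Suc k)) has_vector_derivative \<beta> * B * (\<beta> * x) ^ k / fact k) (at x within {0..t})"
      by (simp add: has_real_derivative_iff_has_vector_derivative)
  qed
  then show ?thesis by simp
qed

lemma map_P_bound:
  assumes T: "0 \<le> T"
  shows "\<exists>B \<beta>. 0 \<le> B \<and> 0 \<le> \<beta> \<and> (\<forall>k. \<forall>t\<in>{0..T}. norm (map_P L0 L1 k t) \<le> B * (\<beta> * t) ^ k / fact k)"
proof -
  obtain K where K: "K > 0" and Kb: "\<And>a b. norm ((a::real^'a^'a) ** (b::real^'a^'a)) \<le> norm a * norm b * K"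
    using bb_mm_bound by blast
  have "compact ((\<lambda>u. mat_exp (u *\<^sub>R L0)) ` {-T..T})"
    by (rule compact_continuous_image[OF mat_exp_cont compact_Icc])
  then have "bounded ((\<lambda>u. mat_exp (u *\<^sub>R L0)) ` {-T..T})" by (rule compact_imp_bounded)
  then obtain B where B: "B > 0" and Bb0: "\<forall>x\<in>(\<lambda>u. mat_exp (u *\<^sub>R L0)) ` {-T..T}. norm x \<le> B"
    unfolding bounded_pos by blast
  have Bb: "\<And>u. u \<in> {-T..T} \<Longrightarrow> norm (mat_exp (u *\<^sub>R L0)) \<le> B" using Bb0 by blast
  define \<beta> where "\<beta> = norm L1 * K * K * B"
  have \<beta>0: "0 \<le> \<beta>" using K B by (simp add: \<beta>_def)
  have "\<forall>t\<in>{0..T}. norm (map_P L0 L1 k t) \<le> B * (\<beta> * t) ^ k / fact k" for k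
  proof (induction k)
    case 0
    show ?case using Bb by auto
  next
    case (Suc k)
    show ?case
    proof
      fix t assume t: "t \<in> {0..T}"
      let ?g = "\<lambda>s. map_P L0 L1 k s ** L1 ** mat_exp ((t - s) *\<^sub>R L0)"
      have contP: "continuous_on {0..T} (map_P L0 L1 k)"
        by (rule continuous_on_vector_derivative) (use map_P_deriv in blast)
      have contE: "continuous_on {0..t} (\<lambda>s. mat_exp ((t - s) *\<^sub>R L0))"
      proof -
        have "continuous_on {0..t} (\<lambda>s. mat_exp (s *\<^sub>R (- L0)) ** mat_exp (t *\<^sub>R L0))"
          by (intro mm_continuous_on mat_exp_cont continuous_on_const)
        then show ?thesis by (simp add: mat_exp_diff)
      qed
      have intg: "?g integrable_on {0..t}"
        by (intro integrable_continuous_interval mm_continuous_on continuous_on_const contE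
            continuous_on_subset[OF contP]) (use t in auto)
      have bnd: "norm (?g s) \<le> \<beta> * B * (\<beta> * s) ^ k / fact k" if s: "s \<in> {0..t}" for s
      proof -
        have "norm (?g s) \<le> norm (map_P L0 L1 k s ** L1) * norm (mat_exp ((t - s) *\<^sub>R L0)) * K" by (rule Kb)
        also have "\<dots> \<le> (norm (map_P L0 L1 k s) * norm L1 * K) * B * K"

        proof -
          have "norm (map_P L0 L1 k s ** L1) \<le> norm (map_P L0 L1 k s) * norm L1 * K" by (rule Kb)
          moreover have "norm (mat_exp ((t - s) *\<^sub>R L0)) \<le> B" by (rule Bb) (use s t in auto)
          ultimately have "norm (map_P L0 L1 k s ** L1) * norm (mat_exp ((t - s) *\<^sub>R L0)) \<le> (norm (map_P L0 L1 k s) * norm L1 * K) * B"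
            by (rule mult_mono) (use K in auto)
          then show ?thesis using K by (intro mult_right_mono) simp_all
        qed
        also have "\<dots> \<le> (B * (\<beta> * s) ^ k / fact k * norm L1 * K) * B * K"

        proof -
          have "norm (map_P L0 L1 k s) \<le> B * (\<beta> * s) ^ k / fact k" using Suc.IH s t by simp
          then have "norm (map_P L0 L1 k s) * (norm L1 * K * B * K) \<le> B * (\<beta> * s) ^ k / fact k * (norm L1 * K * B * K)"
            by (rule mult_right_mono) (use K B in simp)
          then show ?thesis by (simp add: mult_ac)
        qed
        also have "\<dots> = \<beta> * B * (\<beta> * s) ^ k / fact k" by (simp add: \<beta>_def field_simps)
        finally show ?thesis .
      qed
      have "norm (map_P L0 L1 (Suc k) t) = norm (integral {0..t} ?g)" by simp
      also have "\<dots> \<le> integral {0..t} (\<lambda>s. \<beta> * B * (\<beta> * s) ^ k / fact k)"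
        by (rule integral_norm_bound_integral[OF intg _ bnd])
          (use poly_integral[of t \<beta> B k] t in \<open>auto simp: integrable_on_def\<close>)
      also have "\<dots> = B * (\<beta> * t) ^ Suc k / fact (Suc k)"
        by (rule integral_unique[OF poly_integral]) (use t in auto)
      finally show "norm (map_P L0 L1 (Suc k) t) \<le> B * (\<beta> * t) ^ Suc k / fact (Suc k)" .
    qed
  qed
  then show ?thesis using B \<beta>0 by (intro exI[of _ B] exI[of _ \<beta>]) auto
qed

definition Dk :: "real^'n^'n \<Rightarrow> real^'n^'n \<Rightarrow> nat \<Rightarrow> real \<Rightarrow> real^'n^'n" where
  "Dk L0 L1 k t = map_P L0 L1 k t ** L0 + (if k = 0 then 0 else map_P L0 L1 (k - 1) t ** L1)"

lemma series_deriv: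
  fixes w :: "nat \<Rightarrow> real" and T :: real and L0 L1 :: "real^'n^'n"
  assumes T: "0 \<le> T" and w: "\<And>k. \<bar>w k\<bar> \<le> 2 ^ k"
  shows "\<forall>t\<in>{0..T}. summable (\<lambda>k. w k *\<^sub>R map_P L0 L1 k t) \<and> summable (\<lambda>k. w k *\<^sub>R Dk L0 L1 k t) \<and>
     ((\<lambda>t. \<Sum>k. w k *\<^sub>R map_P L0 L1 k t) has_vector_derivative (\<Sum>k. w k *\<^sub>R Dk L0 L1 k t)) (at t within {0..T})"
proof -
  obtain B \<beta> where B: "0 \<le> B" and \<beta>: "0 \<le> \<beta>"
    and Pb: "\<And>k t. t \<in> {0..T} \<Longrightarrow> norm (map_P L0 L1 k t) \<le> B * (\<beta> * t) ^ k / fact k"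
    using map_P_bound[OF T, of L0 L1] by blast
  obtain K where K: "K > 0" and Kb: "\<And>a b. norm ((a::real^'n^'n) ** (b::real^'n^'n)) \<le> norm a * norm b * K"
    using bb_mm_bound by blast
  have mb: "norm (X ** Y) \<le> c * norm Y * K" if "norm X \<le> c" for X Y :: "real^'n^'n" and c
  proof -
    have "norm X * norm Y * K \<le> c * norm Y * K" using that K by (intro mult_right_mono) auto
    then show ?thesis using Kb[of X Y] by linarith
  qed
  define m where "m k = B * (\<beta> * T) ^ k / fact k" for k
  have m0: "0 \<le> m k" for k using B \<beta> T by (simp add: m_def)
  have Pm: "norm (map_P L0 L1 k t) \<le> m k" if t: "t \<in> {0..T}" for k t
  proof -
    have "(\<beta> * t) ^ k \<le> (\<beta> * T) ^ k" using t \<beta> by (intro power_mono mult_left_mono) auto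
    then have "B * (\<beta> * t) ^ k / fact k \<le> m k" unfolding m_def using B
      by (intro divide_right_mono mult_left_mono) auto
    then show ?thesis using Pb[OF t, of k] by linarith
  qed
  define M1 where "M1 k = 2 ^ k * m k" for k
  have sM1: "summable M1"
  proof -
    have "M1 = (\<lambda>k. B * (inverse (fact k) * (2 * \<beta> * T) ^ k))"
      by (rule ext) (simp add: M1_def m_def power_mult_distrib field_simps)
    then show ?thesis using summable_mult[OF summable_exp, of B "2 * \<beta> * T"] by simp
  qed
  define M2 where "M2 k = 2 ^ k * (m k * norm L0 * K + m (k - 1) * norm L1 * K)" for k
  have sM2: "summable M2"
  proof -
    have s1: "summable (\<lambda>k. M1 k * (norm L0 * K))" by (rule summable_mult2[OF sM1])
    have "summable (\<lambda>k. 2 * M1 k * (norm L1 * K))" using summable_mult2[OF sM1, of "2 * norm L1 * K"]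
      by (simp add: mult_ac)
    then have "summable (\<lambda>k. 2 ^ Suc k * m (Suc k - 1) * norm L1 * K)" by (simp add: M1_def mult_ac)
    then have s2: "summable (\<lambda>k. 2 ^ k * m (k - 1) * norm L1 * K)"
      using summable_Suc_iff[where f = "\<lambda>k. 2 ^ k * m (k - 1) * norm L1 * K"] by simp
    have "M2 = (\<lambda>k. M1 k * (norm L0 * K) + 2 ^ k * m (k - 1) * norm L1 * K)"
      by (rule ext) (simp add: M2_def M1_def algebra_simps)
    then show ?thesis using summable_add[OF s1 s2] by simp
  qed
  have b1: "norm (w k *\<^sub>R map_P L0 L1 k t) \<le> M1 k" if t: "t \<in> {0..T}" for k t
    unfolding M1_def using w[of k] Pm[OF t, of k] m0 by (simp add: mult_mono)
  have b2: "norm (w k *\<^sub>R Dk L0 L1 k t) \<le> M2 k" if t: "t \<in> {0..T}" for k t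
  proof -
    have "norm (Dk L0 L1 k t) \<le> m k * norm L0 * K + m (k - 1) * norm L1 * K"
    proof -
      have "norm (map_P L0 L1 k t ** L0) \<le> m k * norm L0 * K"
        by (rule mb[OF Pm[OF t]])
      moreover have "norm (if k = 0 then 0 else map_P L0 L1 (k - 1) t ** L1) \<le> m (k - 1) * norm L1 * K"
        using mb[OF Pm[OF t, of "k-1"], of L1] K m0[of "k-1"] by auto
      ultimately show ?thesis unfolding Dk_def by (meson add_mono norm_triangle_le)
    qed
    then show ?thesis unfolding M2_def using w[of k] by (simp add: mult_mono)
  qed
  have ul: "uniform_limit {0..T} (\<lambda>n t. \<Sum>i<n. w i *\<^sub>R Dk L0 L1 i t) (\<lambda>t. \<Sum>i. w i *\<^sub>R Dk L0 L1 i t) sequentially"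
    by (rule Weierstrass_m_test[OF b2 sM2])
  have der: "((\<lambda>t. w n *\<^sub>R map_P L0 L1 n t) has_derivative (\<lambda>h. h *\<^sub>R (w n *\<^sub>R Dk L0 L1 n x))) (at x within {0..T})"
    if x: "x \<in> {0..T}" for n x
  proof -
    have "(map_P L0 L1 n has_vector_derivative Dk L0 L1 n x) (at x within {0..T})"
      using map_P_deriv[of T L0 L1 n] x unfolding Dk_def by blast
    then have "((\<lambda>t. w n *\<^sub>R map_P L0 L1 n t) has_vector_derivative w n *\<^sub>R Dk L0 L1 n x) (at x within {0..T})"
      by (rule bounded_linear.has_vector_derivative[OF bounded_linear_scaleR_right])
    then show ?thesis by (simp add: has_vector_derivative_def)
  qed
  have unif: "\<forall>\<^sub>F n in sequentially. \<forall>x\<in>{0..T}. \<forall>h. norm ((\<Sum>i<n. h *\<^sub>R (w i *\<^sub>R Dk L0 L1 i x)) - h *\<^sub>R (\<Sum>i. w i *\<^sub>R Dk L0 L1 i x)) \<le> e * norm h"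
    if e: "e > 0" for e
    using uniform_limitD[OF ul e]
  proof (rule eventually_mono)
    fix n assume H: "\<forall>x\<in>{0..T}. dist (\<Sum>i<n. w i *\<^sub>R Dk L0 L1 i x) (\<Sum>i. w i *\<^sub>R Dk L0 L1 i x) < e"
    show "\<forall>x\<in>{0..T}. \<forall>h. norm ((\<Sum>i<n. h *\<^sub>R (w i *\<^sub>R Dk L0 L1 i x)) - h *\<^sub>R (\<Sum>i. w i *\<^sub>R Dk L0 L1 i x)) \<le> e * norm h"
    proof (intro ballI allI)
      fix x h assume x: "x \<in> {0..T}"
      have "(\<Sum>i<n. h *\<^sub>R (w i *\<^sub>R Dk L0 L1 i x)) - h *\<^sub>R (\<Sum>i. w i *\<^sub>R Dk L0 L1 i x) =
          h *\<^sub>R ((\<Sum>i<n. w i *\<^sub>R Dk L0 L1 i x) - (\<Sum>i. w i *\<^sub>R Dk L0 L1 i x))"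
        by (simp add: scaleR_sum_right scaleR_diff_right)
      then have "norm ((\<Sum>i<n. h *\<^sub>R (w i *\<^sub>R Dk L0 L1 i x)) - h *\<^sub>R (\<Sum>i. w i *\<^sub>R Dk L0 L1 i x)) =
          \<bar>h\<bar> * norm ((\<Sum>i<n. w i *\<^sub>R Dk L0 L1 i x) - (\<Sum>i. w i *\<^sub>R Dk L0 L1 i x))" by simp
      also have "\<dots> \<le> \<bar>h\<bar> * e"
      proof (intro mult_left_mono)
        show "norm ((\<Sum>i<n. w i *\<^sub>R Dk L0 L1 i x) - (\<Sum>i. w i *\<^sub>R Dk L0 L1 i x)) \<le> e"
          using H x unfolding dist_norm by (meson less_imp_le)
      qed simp
      finally show "norm ((\<Sum>i<n. h *\<^sub>R (w i *\<^sub>R Dk L0 L1 i x)) - h *\<^sub>R (\<Sum>i. w i *\<^sub>R Dk L0 L1 i x)) \<le> e * norm h"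
        by (simp add: mult.commute)
    qed
  qed
  have summ1: "summable (\<lambda>k. w k *\<^sub>R map_P L0 L1 k t)" if t: "t \<in> {0..T}" for t
    by (rule summable_comparison_test'[OF sM1 b1[OF t]])
  have summ2: "summable (\<lambda>k. w k *\<^sub>R Dk L0 L1 k t)" if t: "t \<in> {0..T}" for t
    by (rule summable_comparison_test'[OF sM2 b2[OF t]])
  have z: "(0::real) \<in> {0..T}" using T by simp
  have "\<exists>g. \<forall>x\<in>{0..T}. (\<lambda>n. w n *\<^sub>R map_P L0 L1 n x) sums g x \<and>
      (g has_derivative (\<lambda>h. h *\<^sub>R (\<Sum>i. w i *\<^sub>R Dk L0 L1 i x))) (at x within {0..T})"
    by (rule has_derivative_series[OF _ der unif z summable_sums[OF summ1[OF z]]]) simp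
  then obtain g where g: "\<forall>x\<in>{0..T}. (\<lambda>n. w n *\<^sub>R map_P L0 L1 n x) sums g x \<and>
      (g has_derivative (\<lambda>h. h *\<^sub>R (\<Sum>i. w i *\<^sub>R Dk L0 L1 i x))) (at x within {0..T})"
    by blast
  show ?thesis
  proof (intro ballI conjI)
    fix t assume t: "t \<in> {0..T}"
    show "summable (\<lambda>k. w k *\<^sub>R map_P L0 L1 k t)" by (rule summ1[OF t])
    show "summable (\<lambda>k. w k *\<^sub>R Dk L0 L1 k t)" by (rule summ2[OF t])
    have d: "(g has_vector_derivative (\<Sum>k. w k *\<^sub>R Dk L0 L1 k t)) (at t within {0..T})"
      using g t by (simp add: has_vector_derivative_def)
    have e: "\<And>x. x \<in> {0..T} \<Longrightarrow> (\<Sum>k. w k *\<^sub>R map_P L0 L1 k x) = g x"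
      using g by (simp add: sums_iff)
    show "((\<lambda>t. \<Sum>k. w k *\<^sub>R map_P L0 L1 k t) has_vector_derivative (\<Sum>k. w k *\<^sub>R Dk L0 L1 k t)) (at t within {0..T})"
      by (rule has_vector_derivative_transform[OF t e d])
  qed
qed

lemma vm_uminus: "x v* (- A) = - (x v* (A::real^'n^'m))"
  by (simp add: vector_matrix_mult_def vec_eq_iff sum_negf)

lemma vm_uminus_left: "(- x) v* (A::real^'n^'m) = - (x v* A)"
  by (simp add: vector_matrix_mult_def vec_eq_iff sum_negf)

lemma ode_unique:
  fixes x :: "real \<Rightarrow> real^'n" and G :: "real^'n^'n"
  assumes T: "0 \<le> T" and d: "\<And>t. t \<in> {0..T} \<Longrightarrow> (x has_vector_derivative x t v* G) (at t within {0..T})"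
    and x0: "x 0 = 0"
  shows "x T = 0"
proof -
  define y where "y t = x t v* mat_exp (t *\<^sub>R (- G))" for t
  have dy: "(y has_vector_derivative 0) (at t within {0..T})" if t: "t \<in> {0..T}" for t
  proof -
    have "((\<lambda>t. x t v* mat_exp (t *\<^sub>R (- G))) has_vector_derivative
        (x t v* ((- G) ** mat_exp (t *\<^sub>R (- G))) + (x t v* G) v* mat_exp (t *\<^sub>R (- G)))) (at t within {0..T})"
      by (rule bounded_bilinear.has_vector_derivative[OF bb_vm d[OF t] mat_exp_deriv_left])
    moreover have "x t v* ((- G) ** mat_exp (t *\<^sub>R (- G))) + (x t v* G) v* mat_exp (t *\<^sub>R (- G)) = 0"
      by (simp add: vector_matrix_mul_assoc[symmetric] vm_uminus vm_uminus_left)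
    ultimately show ?thesis unfolding y_def by simp
  qed
  have "((\<lambda>t. 0) has_integral (y T - y 0)) {0..T}"
    by (rule fundamental_theorem_of_calculus[OF T dy]) 
  then have "y T - y 0 = 0" using has_integral_0 has_integral_unique by blast
  moreover have "y 0 = 0" by (simp add: y_def x0)
  ultimately have yT: "y T = 0" by simp
  have "x T = x T v* (mat_exp (T *\<^sub>R (- G)) ** mat_exp (T *\<^sub>R G))"
    using mat_exp_inv_n[of T G] by simp
  also have "\<dots> = y T v* mat_exp (T *\<^sub>R G)" by (simp add: y_def vector_matrix_mul_assoc)
  also have "\<dots> = 0" by (simp add: yT)
  finally show ?thesis .
qed


definition Ssum :: "real^'n^'n \<Rightarrow> real^'n^'n \<Rightarrow> real \<Rightarrow> real^'n^'n" where
  "Ssum L0 L1 t = (\<Sum>k. map_P L0 L1 k t)"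

definition Msum :: "real^'n^'n \<Rightarrow> real^'n^'n \<Rightarrow> real \<Rightarrow> real^'n^'n" where
  "Msum L0 L1 t = (\<Sum>k. real k *\<^sub>R map_P L0 L1 k t)"

lemma shift_sums:
  fixes f :: "nat \<Rightarrow> 'a::real_normed_vector"
  assumes "(\<lambda>n. f (Suc n)) sums s" and "f 0 = 0"
  shows "f sums s"
  using assms sums_Suc_iff[of f s] by simp

lemma S_deriv:
  fixes L0 L1 :: "real^'n^'n"
  assumes T: "0 \<le> T" and t: "t \<in> {0..T}"
  shows "summable (\<lambda>k. map_P L0 L1 k t) \<and>
    (Ssum L0 L1 has_vector_derivative Ssum L0 L1 t ** (L0 + L1)) (at t within {0..T})"
proof -
  have w: "\<And>k. \<bar>(\<lambda>_. 1::real) k\<bar> \<le> 2 ^ k" by simp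
  from series_deriv[OF T w, of L0 L1] t
  have s: "summable (\<lambda>k. map_P L0 L1 k t)"
    and d: "(Ssum L0 L1 has_vector_derivative (\<Sum>k. Dk L0 L1 k t)) (at t within {0..T})"
    by (auto simp: Ssum_def[abs_def])
  have s1: "(\<lambda>k. map_P L0 L1 k t ** L0) sums (Ssum L0 L1 t ** L0)"
    unfolding Ssum_def by (rule bounded_linear.sums[OF bl_mm_left summable_sums[OF s]])
  have s2: "(\<lambda>k. if k = 0 then 0 else map_P L0 L1 (k - 1) t ** L1) sums (Ssum L0 L1 t ** L1)"
    by (rule shift_sums) (simp_all add: Ssum_def bounded_linear.sums[OF bl_mm_left summable_sums[OF s]])
  have "(\<lambda>k. Dk L0 L1 k t) sums (Ssum L0 L1 t ** L0 + Ssum L0 L1 t ** L1)"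
    unfolding Dk_def by (rule sums_add[OF s1 s2])
  then have "(\<Sum>k. Dk L0 L1 k t) = Ssum L0 L1 t ** (L0 + L1)"
    by (simp add: sums_iff matrix_add_ldistrib)
  with s d show ?thesis by simp
qed

lemma real_le_two_pow: "\<bar>real k\<bar> \<le> 2 ^ k"
proof -
  have "k < 2 ^ k" by (rule less_exp)
  then have "real k < real (2 ^ k)" by (simp only: of_nat_less_iff)
  then show ?thesis by simp
qed

lemma M_deriv:
  fixes L0 L1 :: "real^'n^'n"
  assumes T: "0 \<le> T" and t: "t \<in> {0..T}"
  shows "(Msum L0 L1 has_vector_derivative Msum L0 L1 t ** (L0 + L1) + Ssum L0 L1 t ** L1) (at t within {0..T})"
proof -
  from series_deriv[OF T real_le_two_pow, of L0 L1] t
  have s: "summable (\<lambda>k. real k *\<^sub>R map_P L0 L1 k t)"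
    and d: "(Msum L0 L1 has_vector_derivative (\<Sum>k. real k *\<^sub>R Dk L0 L1 k t)) (at t within {0..T})"
    by (auto simp: Msum_def[abs_def])
  have sS: "summable (\<lambda>k. map_P L0 L1 k t)" using S_deriv[OF T t] by blast
  have s1: "(\<lambda>k. real k *\<^sub>R (map_P L0 L1 k t ** L0)) sums (Msum L0 L1 t ** L0)"
    unfolding Msum_def using bounded_linear.sums[OF bl_mm_left summable_sums[OF s], of L0]
    by (simp add: scalar_matrix_assoc)
  have "(\<lambda>n. (real n *\<^sub>R map_P L0 L1 n t + map_P L0 L1 n t) ** L1) sums ((Msum L0 L1 t + Ssum L0 L1 t) ** L1)"
    unfolding Msum_def Ssum_def
    by (rule bounded_linear.sums[OF bl_mm_left sums_add[OF summable_sums[OF s] summable_sums[OF sS]]])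
  moreover have "\<And>n. (real n *\<^sub>R map_P L0 L1 n t + map_P L0 L1 n t) ** L1 = real (Suc n) *\<^sub>R (map_P L0 L1 n t ** L1)"
    by (simp add: matrix_add_rdistrib' scalar_matrix_assoc[symmetric] scaleR_add_left)
  ultimately have calc: "(\<lambda>n. real (Suc n) *\<^sub>R (map_P L0 L1 n t ** L1)) sums ((Msum L0 L1 t + Ssum L0 L1 t) ** L1)"
    by simp
  have s2: "(\<lambda>k. real k *\<^sub>R (if k = 0 then 0 else map_P L0 L1 (k - 1) t ** L1)) sums ((Msum L0 L1 t + Ssum L0 L1 t) ** L1)"
  proof (rule shift_sums)
    show "(\<lambda>n. real (Suc n) *\<^sub>R (if Suc n = 0 then 0 else map_P L0 L1 (Suc n - 1) t ** L1)) sums ((Msum L0 L1 t + Ssum L0 L1 t) ** L1)"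
      using calc by (simp only: diff_Suc_1 nat.distinct if_False)
  qed simp
  have "(\<lambda>k. real k *\<^sub>R Dk L0 L1 k t) sums (Msum L0 L1 t ** L0 + (Msum L0 L1 t + Ssum L0 L1 t) ** L1)"
    unfolding Dk_def scaleR_add_right by (rule sums_add[OF s1 s2])
  then have "(\<Sum>k. real k *\<^sub>R Dk L0 L1 k t) = Msum L0 L1 t ** (L0 + L1) + Ssum L0 L1 t ** L1"
    by (simp add: sums_iff matrix_add_ldistrib matrix_add_rdistrib')
  with d show ?thesis by simp
qed

lemma map_P_zero: "map_P L0 L1 k 0 = (if k = 0 then mat 1 else 0)"
  by (cases k) (simp_all add: mat_exp_zero)

lemma Ssum_zero: "Ssum L0 L1 0 = mat 1"
  unfolding Ssum_def map_P_zero using sums_single[of 0 "\<lambda>_. mat 1 :: real^'n^'n"]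
  by (simp add: sums_iff)

lemma Msum_zero: "Msum L0 L1 0 = 0"
proof -
  have "(\<lambda>k. real k *\<^sub>R (if k = 0 then mat 1 else 0)) = (\<lambda>_. 0 :: real^'a^'a)" by (rule ext) simp
  then show ?thesis unfolding Msum_def map_P_zero by simp
qed

lemma pS:
  fixes L0 L1 :: "real^'n^'n"
  assumes stat: "p v* (L0 + L1) = 0" and T: "0 \<le> T"
  shows "p v* Ssum L0 L1 T = p"
proof -
  define x where "x t = p v* Ssum L0 L1 t - p" for t
  have "x T = 0"
  proof (rule ode_unique[OF T])
    fix t assume t: "t \<in> {0..T}"
    have "((\<lambda>t. p v* Ssum L0 L1 t) has_vector_derivative p v* (Ssum L0 L1 t ** (L0 + L1))) (at t within {0..T})"
      using S_deriv[OF T t, of L0 L1] by (intro bounded_linear.has_vector_derivative[OF bounded_linear_vm]) blast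
    then have "(x has_vector_derivative p v* (Ssum L0 L1 t ** (L0 + L1))) (at t within {0..T})"
      unfolding x_def by (subst has_vector_derivative_diff_const)
    moreover have "p v* (Ssum L0 L1 t ** (L0 + L1)) = x t v* (L0 + L1)"
      by (simp add: x_def vector_matrix_mul_assoc[symmetric] vector_matrix_mult_diff_distrib stat)
    ultimately show "(x has_vector_derivative x t v* (L0 + L1)) (at t within {0..T})" by simp
  next
    show "x 0 = 0" by (simp add: x_def Ssum_zero)
  qed
  then show ?thesis by (simp add: x_def)
qed

lemma I_deriv:
  assumes t: "t \<in> {0..T}"
  shows "((\<lambda>u. integral {0..u} (\<lambda>v. mat_exp (v *\<^sub>R G))) has_vector_derivative mat_exp (t *\<^sub>R G)) (at t within {0..T})"
  by (rule integral_has_vector_derivative[OF mat_exp_cont t])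

lemma I_mult:
  assumes t: "0 \<le> t"
  shows "integral {0..t} (\<lambda>v. mat_exp (v *\<^sub>R G)) ** G = mat_exp (t *\<^sub>R G) - mat 1"
proof -
  have "((\<lambda>v. mat_exp (v *\<^sub>R G) ** G) has_integral (mat_exp (t *\<^sub>R G) - mat_exp (0 *\<^sub>R G))) {0..t}"
    by (rule fundamental_theorem_of_calculus[OF t mat_exp_deriv_right])
  then have "integral {0..t} ((\<lambda>X. X ** G) \<circ> (\<lambda>v. mat_exp (v *\<^sub>R G))) = mat_exp (t *\<^sub>R G) - mat 1"
    by (simp add: o_def integral_unique mat_exp_zero)
  moreover have "integral {0..t} ((\<lambda>X. X ** G) \<circ> (\<lambda>v. mat_exp (v *\<^sub>R G))) = integral {0..t} (\<lambda>v. mat_exp (v *\<^sub>R G)) ** G"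
    by (rule integral_linear[OF integrable_continuous_interval[OF mat_exp_cont] bl_mm_left])
  ultimately show ?thesis by simp
qed

lemma pM:
  fixes L0 L1 :: "real^'n^'n"
  assumes stat: "p v* (L0 + L1) = 0" and T: "0 \<le> T"
  shows "p v* Msum L0 L1 T = (p v* L1) v* integral {0..T} (\<lambda>v. mat_exp (v *\<^sub>R (L0 + L1)))"
proof -
  define G where "G = L0 + L1"
  define I where "I u = integral {0..u} (\<lambda>v. mat_exp (v *\<^sub>R G))" for u
  define x where "x t = p v* Msum L0 L1 t - (p v* L1) v* I t" for t
  have "x T = 0"
  proof (rule ode_unique[OF T])
    fix t assume t: "t \<in> {0..T}"
    have d1: "((\<lambda>t. p v* Msum L0 L1 t) has_vector_derivative p v* (Msum L0 L1 t ** G + Ssum L0 L1 t ** L1)) (at t within {0..T})"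
      unfolding G_def by (rule bounded_linear.has_vector_derivative[OF bounded_linear_vm M_deriv[OF T t]])
    have d2: "((\<lambda>t. (p v* L1) v* I t) has_vector_derivative (p v* L1) v* mat_exp (t *\<^sub>R G)) (at t within {0..T})"
      unfolding I_def by (rule bounded_linear.has_vector_derivative[OF bounded_linear_vm I_deriv[OF t]])
    have "(x has_vector_derivative (p v* (Msum L0 L1 t ** G + Ssum L0 L1 t ** L1) - (p v* L1) v* mat_exp (t *\<^sub>R G))) (at t within {0..T})"
      unfolding x_def by (rule has_vector_derivative_diff[OF d1 d2])
    moreover have "p v* (Msum L0 L1 t ** G + Ssum L0 L1 t ** L1) - (p v* L1) v* mat_exp (t *\<^sub>R G) = x t v* G"
    proof -
      have pS': "p v* Ssum L0 L1 t = p" using pS[OF stat, of t] t by simp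
      have E: "mat_exp (t *\<^sub>R G) = I t ** G + mat 1" using I_mult[of t G] t by (simp add: I_def)
      show ?thesis
        by (simp add: x_def E vector_matrix_left_distrib vector_matrix_mult_add_rdistrib vector_matrix_mult_diff_rdistrib
            vector_matrix_mult_diff_distrib vector_matrix_mul_assoc[symmetric] pS')
    qed
    ultimately show "(x has_vector_derivative x t v* G) (at t within {0..T})" by simp
  next
    show "x 0 = 0" by (simp add: x_def Msum_zero I_def)
  qed
  then show ?thesis by (simp add: x_def I_def G_def)
qed

lemma D_tendsto:
  fixes G :: "real^'n^'n" and p :: "real^'n"
  assumes bound: "\<forall>t\<ge>0. \<forall>i j. \<bar>mat_exp (t *\<^sub>R G) $ i $ j - p $ j\<bar> \<le> C * exp (- a * t)" and a: "0 < a"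
  shows "((\<lambda>t. integral {0..t} (\<lambda>v. mat_exp (v *\<^sub>R G) - (\<chi> i j. p $ j))) \<longlongrightarrow> drazin G p) at_top"
proof -
  define F where "F v = mat_exp (v *\<^sub>R G) - (\<chi> i j. p $ j)" for v
  define N where "N = real CARD('n)"
  define h where "h v = N * (N * C) * exp (- a * v)" for v
  have Fcont: "continuous_on S F" for S
    unfolding F_def by (intro continuous_on_diff mat_exp_cont continuous_on_const)
  have Fb: "norm (F v) \<le> h v" if v: "0 \<le> v" for v
  proof -
    have "rn (F v) \<le> N * (C * exp (- a * v))"
    proof (rule rn_le)
      fix i
      have "(\<Sum>j\<in>UNIV. \<bar>F v $ i $ j\<bar>) \<le> (\<Sum>j\<in>(UNIV::'n set). C * exp (- a * v))"
        by (intro sum_mono) (use bound v in \<open>simp add: F_def\<close>)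
      then show "(\<Sum>j\<in>UNIV. \<bar>F v $ i $ j\<bar>) \<le> N * (C * exp (- a * v))" by (simp add: N_def)
    qed
    moreover have "norm (F v) \<le> N * rn (F v)" unfolding N_def by (rule norm_le_rn)
    moreover have "0 \<le> N" by (simp add: N_def)
    ultimately have "norm (F v) \<le> N * (N * (C * exp (- a * v)))"
      by (meson mult_left_mono order_trans)
    then show ?thesis by (simp add: h_def mult_ac)
  qed
  have hint: "h integrable_on {0..}"
    unfolding h_def using integrable_on_cmult_left[OF integrable_on_exp_minus_to_infinity[OF a, of 0], of "N * (N * C)"]
    by simp
  have main: "(\<lambda>k. integral {0..X k} F) \<longlonglongrightarrow> integral {0..} F" if X: "filterlim X at_top sequentially" for X
  proof -
    define f where "f k v = (if v \<in> {..X k} then F v else 0)" for k v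
    have fint: "f k integrable_on {0..}" for k
    proof -
      have "F integrable_on ({..X k} \<inter> {0..})"
      proof -
        have "{..X k} \<inter> {0..} = {0..X k}" by auto
        then show ?thesis using integrable_continuous_interval[OF Fcont] by simp
      qed
      then show ?thesis unfolding f_def by (simp only: integrable_restrict_Int)
    qed
    have fle: "norm (f k x) \<le> h x" if "x \<in> {0..}" for k x
    proof -
      have hx: "norm (F x) \<le> h x" using Fb[of x] that by simp
      then have "0 \<le> h x" by (meson norm_ge_zero order_trans)
      then show ?thesis using hx by (simp add: f_def)
    qed
    have fconv: "(\<lambda>k. f k x) \<longlonglongrightarrow> F x" if "x \<in> {0..}" for x
    proof -
      have "eventually (\<lambda>k. x \<le> X k) sequentially" using X by (simp add: filterlim_at_top)
      then have "eventually (\<lambda>k. f k x = F x) sequentially" by eventually_elim (simp add: f_def)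
      then show ?thesis by (rule tendsto_eventually)
    qed
    have "(\<lambda>k. integral {0..} (f k)) \<longlonglongrightarrow> integral {0..} F"
      using dominated_convergence(2)[OF fint hint fle fconv] .
    moreover have "integral {0..} (f k) = integral {0..X k} F" for k
    proof -
      have "integral {0..} (f k) = integral ({..X k} \<inter> {0..}) F" unfolding f_def by (rule integral_restrict_Int)
      moreover have "{..X k} \<inter> {0..} = {0..X k}" by auto
      ultimately show ?thesis by simp
    qed
    ultimately show ?thesis by simp
  qed
  have "((\<lambda>t. integral {0..t} F) \<longlongrightarrow> integral {0..} F) at_top"
    by (rule tendsto_at_topI_sequentially) (rule main)
  then show ?thesis unfolding drazin_def F_def .
qed

lemma vm_const: "q v* (\<chi> i j. p $ j) = (\<Sum>i\<in>UNIV. q $ i) *\<^sub>R (p::real^'n)"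
  by (simp add: vector_matrix_mult_def vec_eq_iff sum_distrib_right)

lemma sum_vm: "(\<Sum>j\<in>UNIV. (x v* A) $ j) = (\<Sum>i\<in>UNIV. x $ i * (A *v 1) $ i)"
  by (simp add: vector_matrix_mult_def matrix_vector_mult_def sum_distrib_left) (rule sum.swap)

lemma bl_phi: "bounded_linear (\<lambda>A::real^'n^'m. \<Sum>j\<in>UNIV. c j * (p v* A) $ j)"
  by (intro bounded_linear_sum bounded_linear_compose[OF bounded_linear_mult_right]
      bounded_linear_compose[OF bounded_linear_vec_nth bounded_linear_vm])

lemma swap_lemma: "summable (f :: nat \<Rightarrow> real^'n^'m) \<Longrightarrow> (\<Sum>k. \<Sum>j\<in>UNIV. c j * (p v* f k) $ j) = (\<Sum>j\<in>UNIV. c j * (p v* suminf f) $ j)"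
  using bounded_linear.suminf[OF bl_phi, of f c p] by simp

lemma D_row:
  fixes G :: "real^'n^'n"
  assumes t: "0 \<le> t" and row: "G *v 1 = 0" and ps: "(\<Sum>i\<in>UNIV. p $ i) = 1"
  shows "integral {0..t} (\<lambda>v. mat_exp (v *\<^sub>R G) - (\<chi> i j. p $ j)) *v 1 = 0"
proof -
  have int: "(\<lambda>v. mat_exp (v *\<^sub>R G) - (\<chi> i j. p $ j)) integrable_on {0..t}"
    by (intro integrable_continuous_interval continuous_on_diff mat_exp_cont continuous_on_const)
  have "integral {0..t} (\<lambda>v. mat_exp (v *\<^sub>R G) - (\<chi> i j. p $ j)) *v 1 =
      integral {0..t} ((\<lambda>A. A *v 1) \<circ> (\<lambda>v. mat_exp (v *\<^sub>R G) - (\<chi> i j. p $ j)))"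
    by (rule integral_linear[OF int bounded_linear_mv, symmetric])
  also have "(\<lambda>A. A *v 1) \<circ> (\<lambda>v. mat_exp (v *\<^sub>R G) - (\<chi> i j. p $ j)) = (\<lambda>v. 0)"
  proof (rule ext)
    fix v
    have "mat_exp (v *\<^sub>R G) *v 1 = 1"
      by (rule mat_exp_row1) (simp add: scaleR_matrix_vector_assoc[symmetric] row)
    moreover have "(\<chi> i j. p $ j) *v (1::real^'n) = 1"
      using ps by (simp add: matrix_vector_mult_def vec_eq_iff)
    ultimately show "((\<lambda>A. A *v 1) \<circ> (\<lambda>v. mat_exp (v *\<^sub>R G) - (\<chi> i j. p $ j))) v = 0"
      by (simp add: matrix_vector_mult_diff_rdistrib)
  qed
  finally show ?thesis by simp
qed

lemma I_split:
  fixes G :: "real^'n^'n"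
  assumes t: "0 \<le> t"
  shows "integral {0..t} (\<lambda>v. mat_exp (v *\<^sub>R G)) =
    integral {0..t} (\<lambda>v. mat_exp (v *\<^sub>R G) - (\<chi> i j. p $ j)) + t *\<^sub>R (\<chi> i j. p $ j)"
proof -
  have int: "(\<lambda>v. mat_exp (v *\<^sub>R G) - (\<chi> i j. p $ j)) integrable_on {0..t}"
    by (intro integrable_continuous_interval continuous_on_diff mat_exp_cont continuous_on_const)
  have "integral {0..t} (\<lambda>v. mat_exp (v *\<^sub>R G)) =
      integral {0..t} (\<lambda>v. (mat_exp (v *\<^sub>R G) - (\<chi> i j. p $ j)) + (\<chi> i j. p $ j))" by simp
  also have "\<dots> = integral {0..t} (\<lambda>v. mat_exp (v *\<^sub>R G) - (\<chi> i j. p $ j)) + integral {0..t} (\<lambda>v. (\<chi> i j. p $ j))"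
    by (rule integral_add[OF int]) (simp add: integrable_const_ivl)
  also have "integral {0..t} (\<lambda>v. (\<chi> i j. p $ j)) = t *\<^sub>R (\<chi> i j. p $ j)" using t by simp
  finally show ?thesis .
qed


theorem proposition3:
  fixes L0 L1 :: "real^'n^'n" and p :: "real^'n" and lab :: "'n \<Rightarrow> nat"
  assumes "is_MAP L0 L1"
    and "irreducible_gen (L0 + L1)"
    and "invertible L0"
    and "bij_betw lab UNIV {1..CARD('n)}"
    and "p v* (L0 + L1) = 0"
    and "(\<Sum>i\<in>UNIV. p $ i) = 1"
  shows "((\<lambda>t. map_cov L0 L1 p lab t) \<longlongrightarrow>
           (\<Sum>j\<in>UNIV. real (lab j) * (p v* (L1 ** drazin (L0 + L1) p)) $ j)) at_top"
proof -
  note MAP = assms(1) and irr = assms(2) and stat = assms(5) and ps = assms(6)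
  define G where "G = L0 + L1"
  have off: "0 \<le> G $ i $ j" if "i \<noteq> j" for i j
    using MAP that unfolding is_MAP_def G_def by (simp add: add_nonneg_nonneg)
  have row: "G *v 1 = 0"
    using MAP unfolding is_MAP_def G_def by (simp add: vec_eq_iff row_sum_eq)
  obtain C a where a: "0 < a" and bound: "\<forall>t\<ge>0. \<forall>i j. \<bar>mat_exp (t *\<^sub>R G) $ i $ j - p $ j\<bar> \<le> C * exp (- a * t)"
    using ergodic[OF off row irr[folded G_def] stat[folded G_def] ps] by blast
  define Cm where "Cm = (\<chi> (i::'n) j. p $ j)"
  define D where "D t = integral {0..t} (\<lambda>v. mat_exp (v *\<^sub>R G) - Cm)" for t
  define q where "q = p v* L1"
  define c where "c j = real (lab j)" for j
  have Dlim: "(D \<longlongrightarrow> drazin G p) at_top"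
    unfolding D_def Cm_def by (rule D_tendsto[OF bound a])
  have lim: "((\<lambda>t. \<Sum>j\<in>UNIV. c j * (q v* D t) $ j) \<longlongrightarrow> (\<Sum>j\<in>UNIV. c j * (q v* drazin G p) $ j)) at_top"
    by (rule bounded_linear.tendsto[OF bl_phi Dlim])
  have key: "map_cov L0 L1 p lab t = (\<Sum>j\<in>UNIV. c j * (q v* D t) $ j)" if t: "0 \<le> t" for t
  proof -
    have tt: "t \<in> {0..t}" using t by simp
    have sM: "summable (\<lambda>k. real k *\<^sub>R map_P L0 L1 k t)"
      using series_deriv[OF t real_le_two_pow, of L0 L1] tt by blast
    have sS: "summable (\<lambda>k. map_P L0 L1 k t)" using S_deriv[OF t tt] by blast
    define lam where "lam = (\<Sum>i\<in>UNIV. q $ i)"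
    have pM': "p v* Msum L0 L1 t = q v* D t + (t * lam) *\<^sub>R p"
      using pM[OF stat t] I_split[OF t, of G p] vm_const[of q p]
      by (simp add: q_def[symmetric] G_def[symmetric] D_def Cm_def vector_matrix_mult_add_rdistrib
          vector_scaleR_matrix_ac lam_def)
    have pS': "p v* Ssum L0 L1 t = p" using pS[OF stat t] .
    have D0: "(\<Sum>j\<in>UNIV. (q v* D t) $ j) = 0"
      using D_row[OF t row ps] by (simp add: sum_vm D_def Cm_def)
    have T1: "(\<Sum>k. \<Sum>j\<in>UNIV. real k * real (lab j) * map_joint L0 L1 p t k j) =
        (\<Sum>j\<in>UNIV. c j * (p v* Msum L0 L1 t) $ j)"
    proof -
      have "(\<lambda>k. \<Sum>j\<in>UNIV. real k * real (lab j) * map_joint L0 L1 p t k j) =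
          (\<lambda>k. \<Sum>j\<in>UNIV. c j * (p v* (real k *\<^sub>R map_P L0 L1 k t)) $ j)"
        by (simp add: map_joint_def vector_scaleR_matrix_ac c_def mult_ac)
      then show ?thesis using swap_lemma[OF sM, of c p] by (simp add: Msum_def)
    qed
    have T2: "(\<Sum>k. \<Sum>j\<in>UNIV. real k * map_joint L0 L1 p t k j) = (\<Sum>j\<in>UNIV. (p v* Msum L0 L1 t) $ j)"
    proof -
      have "(\<lambda>k. \<Sum>j\<in>UNIV. real k * map_joint L0 L1 p t k j) =
          (\<lambda>k. \<Sum>j\<in>UNIV. (\<lambda>_. 1) j * (p v* (real k *\<^sub>R map_P L0 L1 k t)) $ j)"
        by (simp add: map_joint_def vector_scaleR_matrix_ac)
      then show ?thesis using swap_lemma[OF sM, of "\<lambda>_. 1" p] by (simp add: Msum_def)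
    qed
    have T3: "(\<Sum>k. \<Sum>j\<in>UNIV. real (lab j) * map_joint L0 L1 p t k j) = (\<Sum>j\<in>UNIV. c j * p $ j)"
    proof -
      have "(\<lambda>k. \<Sum>j\<in>UNIV. real (lab j) * map_joint L0 L1 p t k j) =
          (\<lambda>k. \<Sum>j\<in>UNIV. c j * (p v* map_P L0 L1 k t) $ j)"
        by (simp add: map_joint_def c_def)
      then show ?thesis using swap_lemma[OF sS, of c p] pS' by (simp add: Ssum_def)
    qed
    have "map_cov L0 L1 p lab t =
        (\<Sum>j\<in>UNIV. c j * (p v* Msum L0 L1 t) $ j) - (\<Sum>j\<in>UNIV. (p v* Msum L0 L1 t) $ j) * (\<Sum>j\<in>UNIV. c j * p $ j)"
      unfolding map_cov_def T1 T2 T3 ..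
    also have "\<dots> = (\<Sum>j\<in>UNIV. c j * (q v* D t) $ j)"
      by (simp add: pM' D0 ps algebra_simps sum.distrib sum_distrib_left[symmetric] sum_distrib_right)
    finally show ?thesis .
  qed
  have "((\<lambda>t. map_cov L0 L1 p lab t) \<longlongrightarrow> (\<Sum>j\<in>UNIV. c j * (q v* drazin G p) $ j)) at_top"
  proof (rule Lim_transform_eventually[OF lim])
    show "\<forall>\<^sub>F t in at_top. (\<Sum>j\<in>UNIV. c j * (q v* D t) $ j) = map_cov L0 L1 p lab t"
      using eventually_ge_at_top[of "0::real"] by eventually_elim (simp add: key)
  qed
  then show ?thesis by (simp add: c_def q_def G_def vector_matrix_mul_assoc)
qed


end
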